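(* Let $G=G_1^{t_1}\square G_2^{t_2}\square \cdots \square G_k^{t_k}$ be a connected graph decomposed into its Cartesian prime factors, where $G_1,\ldots,G_k$ are pairwise non-isomorphic connected prime graphs and $t_1,\ldots,t_k$ are positive integers. Then $$\theta(G)=\max\left\{\left(\theta(G_i^{t_i})-1\right)\cdot \frac{|G|}{|G_i^{t_i}|} \; : \; i=1,\ldots,k\right\}+1.$$
   Context: Graphs are finite and simple; $|H|$ denotes the number of vertices of $H$. A vertex coloring of a graph is distinguishing if the identity is the only automorphism preserving it. The distinguishing threshold $\theta(H)$ of a graph $H$ is the minimum number $t$ such that for every $k\geq t$, every vertex coloring of $H$ using $k$ colors is distinguishing. The Cartesian product $G\square H$ has vertex set $V(G)\times V(H)$, with $(g,h)\sim(g',h')$ iff either $g=g'$ and $hh'\in E(H)$, or $gg'\in E(G)$ and $h=h'$; $H^t$ denotes the $t$-th Cartesian power. A graph is prime if it is not isomorphic to a Cartesian product of two graphs both non-isomorphic to it. *)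

theory Defs
  imports Main
begin

type_synonym 'a graph = "'a set \<times> ('a \<Rightarrow> 'a \<Rightarrow> bool)"

definition verts :: "'a graph \<Rightarrow> 'a set" where "verts G = fst G"
definition adj :: "'a graph \<Rightarrow> 'a \<Rightarrow> 'a \<Rightarrow> bool" where "adj G = snd G"

definition graph :: "'a graph \<Rightarrow> bool" where
  "graph G \<longleftrightarrow> finite (verts G)
     \<and> (\<forall>x y. adj G x y \<longrightarrow> x \<in> verts G \<and> y \<in> verts G)
     \<and> (\<forall>x y. adj G x y \<longrightarrow> adj G y x)
     \<and> (\<forall>x. \<not> adj G x x)"

definition connected_graph :: "'a graph \<Rightarrow> bool" where
  "connected_graph G \<longleftrightarrow> verts G \<noteq> {}
     \<and> (\<forall>x\<in>verts G. \<forall>y\<in>verts G. (adj G)\<^sup>*\<^sup>* x y)"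

definition iso :: "'a graph \<Rightarrow> 'b graph \<Rightarrow> bool" where
  "iso G H \<longleftrightarrow> (\<exists>f. bij_betw f (verts G) (verts H)
     \<and> (\<forall>x\<in>verts G. \<forall>y\<in>verts G. adj G x y \<longleftrightarrow> adj H (f x) (f y)))"

definition cart :: "'a graph \<Rightarrow> 'b graph \<Rightarrow> ('a \<times> 'b) graph" where
  "cart G H = (verts G \<times> verts H,
     \<lambda>(g, h) (g', h'). (g = g' \<and> g \<in> verts G \<and> adj H h h')
                     \<or> (adj G g g' \<and> h = h' \<and> h \<in> verts H))"

definition cartprod :: "'a graph list \<Rightarrow> 'a list graph" where
  "cartprod Hs =
    ({xs. length xs = length Hs \<and> (\<forall>j<length Hs. xs ! j \<in> verts (Hs ! j))},
     \<lambda>xs ys. length xs = length Hs \<and> (\<forall>j<length Hs. xs ! j \<in> verts (Hs ! j))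
           \<and> length ys = length Hs \<and> (\<forall>j<length Hs. ys ! j \<in> verts (Hs ! j))
           \<and> (\<exists>j<length Hs. adj (Hs ! j) (xs ! j) (ys ! j)
                 \<and> (\<forall>l<length Hs. l \<noteq> j \<longrightarrow> xs ! l = ys ! l)))"

definition cpower :: "'a graph \<Rightarrow> nat \<Rightarrow> 'a list graph" where
  "cpower H t = cartprod (replicate t H)"

text \<open>Factors are taken on vertex type nat, which is no loss since all graphs
  are finite and everything is isomorphism invariant.\<close>
definition prime_graph :: "'a graph \<Rightarrow> bool" where
  "prime_graph G \<longleftrightarrow> \<not> (\<exists>(H::nat graph) (K::nat graph). graph H \<and> graph K
      \<and> iso G (cart H K) \<and> \<not> iso H G \<and> \<not> iso K G)"

definition automorphism :: "'a graph \<Rightarrow> ('a \<Rightarrow> 'a) \<Rightarrow> bool" where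
  "automorphism G f \<longleftrightarrow> bij_betw f (verts G) (verts G)
     \<and> (\<forall>x\<in>verts G. \<forall>y\<in>verts G. adj G x y \<longleftrightarrow> adj G (f x) (f y))"

definition distinguishing :: "'a graph \<Rightarrow> ('a \<Rightarrow> nat) \<Rightarrow> bool" where
  "distinguishing G c \<longleftrightarrow> (\<forall>f. automorphism G f \<longrightarrow> (\<forall>v\<in>verts G. c (f v) = c v)
       \<longrightarrow> (\<forall>v\<in>verts G. f v = v))"

definition dist_threshold :: "'a graph \<Rightarrow> nat" where
  "dist_threshold G = (LEAST t. t \<ge> 1 \<and> (\<forall>k\<ge>t. \<forall>c :: 'a \<Rightarrow> nat.
       card (c ` verts G) = k \<longrightarrow> distinguishing G c))"

end

theory Submission
  imports Defs
begin

lemma graphD: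
  assumes "graph G"
  shows "finite (verts G)" "adj G x y \<Longrightarrow> x \<in> verts G" "adj G x y \<Longrightarrow> y \<in> verts G"
    "adj G x y \<Longrightarrow> adj G y x" "\<not> adj G x x"
  using assms unfolding graph_def by auto

definition gdist :: "'a graph \<Rightarrow> 'a \<Rightarrow> 'a \<Rightarrow> nat" where
  "gdist G x y = (LEAST n. (adj G ^^ n) x y)"

lemma walk_in:
  assumes "graph G" "(adj G ^^ n) x y" "x \<in> verts G"
  shows "y \<in> verts G"
  using assms(2,3)
proof (induction n arbitrary: y)
  case 0 then show ?case by simp
next
  case (Suc n)
  then obtain z where "(adj G ^^ n) x z" "adj G z y" by auto
  then show ?case using graphD[OF assms(1)] by auto
qed

lemma walk_sym:
  assumes "graph G" "(adj G ^^ n) x y"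
  shows "(adj G ^^ n) y x"
  using assms(2)
proof (induction n arbitrary: y)
  case 0 then show ?case by simp
next
  case (Suc n)
  then obtain z where z: "(adj G ^^ n) x z" "adj G z y" by auto
  have "(adj G ^^ n) z x" using Suc.IH z(1) .
  then show ?case using z(2) graphD(4)[OF assms(1)] relpowp_Suc_I2 by metis
qed

lemma gdist_walk:
  assumes "(adj G)\<^sup>*\<^sup>* x y"
  shows "(adj G ^^ gdist G x y) x y"
  using assms unfolding gdist_def rtranclp_power by (metis LeastI_ex)

lemma gdist_le:
  assumes "(adj G ^^ n) x y"
  shows "gdist G x y \<le> n"
  using assms unfolding gdist_def by (rule Least_le)

lemma walk_trans:
  assumes "(R ^^ m) x y" "(R ^^ n) y z"
  shows "(R ^^ (m + n)) x z"
  using assms by (auto simp: relpowp_add)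

lemma gdist_triangle:
  assumes "(adj G)\<^sup>*\<^sup>* x y" "(adj G)\<^sup>*\<^sup>* y z"
  shows "gdist G x z \<le> gdist G x y + gdist G y z"
  by (rule gdist_le, rule walk_trans, rule gdist_walk[OF assms(1)], rule gdist_walk[OF assms(2)])

lemma gdist_self[simp]: "gdist G x x = 0"
  using gdist_le[where G=G and n=0 and x=x and y=x] by simp

lemma gdist_zero:
  assumes "(adj G)\<^sup>*\<^sup>* x y" "gdist G x y = 0"
  shows "x = y"
  using gdist_walk[OF assms(1)] assms(2) by simp

lemma gdist_adj:
  assumes "adj G x y"
  shows "gdist G x y \<le> 1"
  using gdist_le[where G=G and n=1 and x=x and y=y] assms by (auto simp: relcompp_apply)

lemma gdist_sym:
  assumes "graph G"
  shows "gdist G x y = gdist G y x"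
proof -
  have "\<And>n. (adj G ^^ n) x y \<longleftrightarrow> (adj G ^^ n) y x" using walk_sym[OF assms] by blast
  then show ?thesis unfolding gdist_def by simp
qed

lemma aut_walk:
  assumes "automorphism G f" "graph G" "(adj G ^^ n) x y" "x \<in> verts G"
  shows "(adj G ^^ n) (f x) (f y)"
  using assms(3,4)
proof (induction n arbitrary: y)
  case 0 then show ?case by simp
next
  case (Suc n)
  then obtain z where z: "(adj G ^^ n) x z" "adj G z y" by auto
  have zv: "z \<in> verts G" using walk_in[OF assms(2) z(1) Suc.prems(2)] .
  have yv: "y \<in> verts G" using graphD(3)[OF assms(2) z(2)] .
  have "adj G (f z) (f y)" using assms(1) zv yv z(2) unfolding automorphism_def by blast
  then show ?case using Suc.IH[OF z(1) Suc.prems(2)] relpowp_Suc_I by metis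
qed

lemma aut_inv:
  assumes "automorphism G f"
  shows "automorphism G (inv_into (verts G) f)"
    "\<And>x. x \<in> verts G \<Longrightarrow> inv_into (verts G) f (f x) = x"
    "\<And>x. x \<in> verts G \<Longrightarrow> f (inv_into (verts G) f x) = x"
proof -
  have b: "bij_betw f (verts G) (verts G)" using assms unfolding automorphism_def by blast
  show i1: "\<And>x. x \<in> verts G \<Longrightarrow> inv_into (verts G) f (f x) = x"
    using b by (simp add: bij_betw_def)
  show i2: "\<And>x. x \<in> verts G \<Longrightarrow> f (inv_into (verts G) f x) = x"
    using b by (simp add: bij_betw_def f_inv_into_f)
  have bb: "bij_betw (inv_into (verts G) f) (verts G) (verts G)" using b bij_betw_inv_into by blast
  have "\<forall>x\<in>verts G. \<forall>y\<in>verts G. adj G x y \<longleftrightarrow> adj G (inv_into (verts G) f x) (inv_into (verts G) f y)"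
  proof (intro ballI)
    fix x y assume xy: "x \<in> verts G" "y \<in> verts G"
    have "inv_into (verts G) f x \<in> verts G" "inv_into (verts G) f y \<in> verts G"
      using bb xy bij_betwE by blast+
    then show "adj G x y \<longleftrightarrow> adj G (inv_into (verts G) f x) (inv_into (verts G) f y)"
      using assms unfolding automorphism_def using i2 xy by metis
  qed
  then show "automorphism G (inv_into (verts G) f)" using bb unfolding automorphism_def by blast
qed

lemma aut_in:
  assumes "automorphism G f" "x \<in> verts G"
  shows "f x \<in> verts G"
  using assms unfolding automorphism_def bij_betw_def by blast

lemma aut_gdist:
  assumes "automorphism G f" "graph G" "x \<in> verts G" "y \<in> verts G"
  shows "gdist G (f x) (f y) = gdist G x y"
proof -
  let ?g = "inv_into (verts G) f"
  have "\<And>n. (adj G ^^ n) x y \<longleftrightarrow> (adj G ^^ n) (f x) (f y)"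
  proof
    fix n assume "(adj G ^^ n) x y" then show "(adj G ^^ n) (f x) (f y)" using aut_walk assms by metis
  next
    fix n assume "(adj G ^^ n) (f x) (f y)"
    then have "(adj G ^^ n) (?g (f x)) (?g (f y))"
      using aut_walk[OF aut_inv(1)[OF assms(1)] assms(2)] aut_in assms by metis
    then show "(adj G ^^ n) x y" using aut_inv(2)[OF assms(1)] assms by simp
  qed
  then show ?thesis unfolding gdist_def by simp
qed

lemma verts_cp: "verts (cartprod Ts) = {xs. length xs = length Ts \<and> (\<forall>j<length Ts. xs!j \<in> verts (Ts!j))}"
  unfolding cartprod_def verts_def by simp

lemma adj_cp: "adj (cartprod Ts) x y \<longleftrightarrow> x \<in> verts (cartprod Ts) \<and> y \<in> verts (cartprod Ts)
   \<and> (\<exists>j<length Ts. adj (Ts!j) (x!j) (y!j) \<and> (\<forall>l<length Ts. l \<noteq> j \<longrightarrow> x!l = y!l))"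
  unfolding verts_cp unfolding cartprod_def adj_def by simp

definition good :: "'a graph list \<Rightarrow> bool" where
  "good Ts \<longleftrightarrow> (\<forall>j<length Ts. graph (Ts!j) \<and>
      (\<forall>a\<in>verts (Ts!j). \<forall>b\<in>verts (Ts!j). (adj (Ts!j))\<^sup>*\<^sup>* a b))"

lemma goodD:
  assumes "good Ts" "j < length Ts"
  shows "graph (Ts!j)" "a \<in> verts (Ts!j) \<Longrightarrow> b \<in> verts (Ts!j) \<Longrightarrow> (adj (Ts!j))\<^sup>*\<^sup>* a b"
  using assms unfolding good_def by auto

lemma graph_cp:
  assumes "\<forall>j<length Ts. graph (Ts!j)"
  shows "graph (cartprod Ts)"
proof -
  let ?U = "\<Union>(verts ` set Ts)"
  have "\<forall>G\<in>set Ts. finite (verts G)" using assms graphD(1) by (metis in_set_conv_nth)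
  then have fU: "finite ?U" by simp
  have "verts (cartprod Ts) \<subseteq> {xs. set xs \<subseteq> ?U \<and> length xs = length Ts}"
    unfolding verts_cp by (auto simp: in_set_conv_nth) (metis nth_mem)
  then have f: "finite (verts (cartprod Ts))" using finite_lists_length_eq[OF fU] finite_subset by blast
  have s: "\<forall>x y. adj (cartprod Ts) x y \<longrightarrow> adj (cartprod Ts) y x"
    unfolding adj_cp using assms graphD(4) by metis
  have i: "\<forall>x. \<not> adj (cartprod Ts) x x"
    unfolding adj_cp using assms graphD(5) by metis
  show ?thesis unfolding graph_def using f s i adj_cp by blast
qed

lemma upd_in_cp:
  assumes "x \<in> verts (cartprod Ts)" "j < length Ts" "a \<in> verts (Ts!j)"
  shows "x[j := a] \<in> verts (cartprod Ts)"
  using assms unfolding verts_cp by (auto simp: nth_list_update)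

lemma adj_upd_cp:
  assumes "x \<in> verts (cartprod Ts)" "j < length Ts" "adj (Ts!j) a b" "graph (Ts!j)"
  shows "adj (cartprod Ts) (x[j := a]) (x[j := b])"
proof -
  have ab: "a \<in> verts (Ts!j)" "b \<in> verts (Ts!j)" using graphD[OF assms(4)] assms(3) by auto
  show ?thesis unfolding adj_cp
    using upd_in_cp[OF assms(1,2) ab(1)] upd_in_cp[OF assms(1,2) ab(2)] assms(2,3) assms(1)
    unfolding verts_cp by (auto simp: nth_list_update)
qed

lemma lift_walk:
  assumes "x \<in> verts (cartprod Ts)" "j < length Ts" "graph (Ts!j)" "(adj (Ts!j) ^^ q) (x!j) a"
  shows "(adj (cartprod Ts) ^^ q) x (x[j := a])"
  using assms(4)
proof (induction q arbitrary: a)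
  case 0
  then have "a = x!j" by simp
  then show ?case by simp
next
  case (Suc q)
  then obtain b where b: "(adj (Ts!j) ^^ q) (x!j) b" "adj (Ts!j) b a" by auto
  have "adj (cartprod Ts) (x[j := b]) (x[j := a])" using adj_upd_cp[OF assms(1,2) b(2) assms(3)] .
  then show ?case using Suc.IH[OF b(1)] relpowp_Suc_I by metis
qed

definition Dsum :: "'a graph list \<Rightarrow> 'a list \<Rightarrow> 'a list \<Rightarrow> nat" where
  "Dsum Ts x y = (\<Sum>p<length Ts. gdist (Ts!p) (x!p) (y!p))"

lemma walk_Dsum:
  assumes "good Ts" "x \<in> verts (cartprod Ts)" "y \<in> verts (cartprod Ts)"
  shows "(adj (cartprod Ts) ^^ Dsum Ts x y) x y"
proof -
  let ?n = "length Ts"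
  let ?z = "\<lambda>k. take k y @ drop k x"
  have lx: "length x = ?n" and ly: "length y = ?n" using assms(2,3) unfolding verts_cp by auto
  have main: "k \<le> ?n \<Longrightarrow> ?z k \<in> verts (cartprod Ts) \<and>
      (adj (cartprod Ts) ^^ (\<Sum>p<k. gdist (Ts!p) (x!p) (y!p))) x (?z k)" for k
  proof (induction k)
    case 0 then show ?case using assms(2) by simp
  next
    case (Suc k)
    then have k: "k < ?n" by simp
    have zk: "?z k \<in> verts (cartprod Ts)" using Suc by simp
    have zkk: "?z k ! k = x!k" using k lx ly by (simp add: nth_append)
    have eq: "(?z k)[k := y!k] = ?z (Suc k)"
      by (rule nth_equalityI) (use k lx ly in \<open>auto simp: nth_append nth_list_update min_def take_Suc_conv_app_nth\<close>)
    have xv: "x!k \<in> verts (Ts!k)" "y!k \<in> verts (Ts!k)" using assms(2,3) k unfolding verts_cp by auto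
    have "(adj (Ts!k) ^^ gdist (Ts!k) (x!k) (y!k)) (x!k) (y!k)"
      by (rule gdist_walk, rule goodD(2)[OF assms(1) k xv])
    then have w: "(adj (cartprod Ts) ^^ gdist (Ts!k) (x!k) (y!k)) (?z k) (?z (Suc k))"
      using lift_walk[OF zk k goodD(1)[OF assms(1) k]] zkk eq by metis
    have "?z (Suc k) \<in> verts (cartprod Ts)" using upd_in_cp[OF zk k xv(2)] eq by simp
    then show ?case using walk_trans[OF conjunct2[OF Suc.IH] w] Suc.prems by simp
  qed
  have "?z ?n = y" using lx ly by simp
  then show ?thesis using main[of ?n] unfolding Dsum_def by simp
qed

lemma Dsum_le_walk:
  assumes "good Ts" "(adj (cartprod Ts) ^^ N) x z" "x \<in> verts (cartprod Ts)" "z \<in> verts (cartprod Ts)"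
  shows "Dsum Ts x z \<le> N"
  using assms(2,3)
proof (induction N arbitrary: x)
  case 0 then show ?case by (simp add: Dsum_def)
next
  case (Suc N)
  then obtain y where y: "adj (cartprod Ts) x y" "(adj (cartprod Ts) ^^ N) y z"
    using relpowp_Suc_D2 by metis
  then have yv: "y \<in> verts (cartprod Ts)" unfolding adj_cp by blast
  obtain j where j: "j < length Ts" "adj (Ts!j) (x!j) (y!j)" "\<forall>l<length Ts. l \<noteq> j \<longrightarrow> x!l = y!l"
    using y(1) unfolding adj_cp by blast
  have le: "gdist (Ts!p) (x!p) (z!p) \<le> gdist (Ts!p) (y!p) (z!p) + (if p = j then 1 else 0)"
    if p: "p < length Ts" for p
  proof (cases "p = j")
    case True
    have g: "graph (Ts!j)" using goodD(1)[OF assms(1) j(1)] .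
    have v: "x!j \<in> verts (Ts!j)" "y!j \<in> verts (Ts!j)" "z!j \<in> verts (Ts!j)"
      using Suc.prems yv assms(4) j(1) unfolding verts_cp by auto
    have "gdist (Ts!j) (x!j) (z!j) \<le> gdist (Ts!j) (x!j) (y!j) + gdist (Ts!j) (y!j) (z!j)"
      by (rule gdist_triangle; rule goodD(2)[OF assms(1) j(1)]; use v in simp)
    then show ?thesis using gdist_adj[OF j(2)] True by simp
  next
    case False then show ?thesis using j(3) p by simp
  qed
  have "Dsum Ts x z \<le> (\<Sum>p<length Ts. gdist (Ts!p) (y!p) (z!p) + (if p = j then 1 else 0))"
    unfolding Dsum_def by (rule sum_mono) (use le in simp)
  also have "\<dots> = Dsum Ts y z + 1" unfolding Dsum_def sum.distrib using j(1) by simp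
  finally show ?case using Suc.IH[OF y(2) yv] by simp
qed

lemma gdist_cp:
  assumes "good Ts" "x \<in> verts (cartprod Ts)" "y \<in> verts (cartprod Ts)"
  shows "gdist (cartprod Ts) x y = Dsum Ts x y"
proof (rule antisym)
  show "gdist (cartprod Ts) x y \<le> Dsum Ts x y" using gdist_le walk_Dsum[OF assms] by metis
  have "(adj (cartprod Ts))\<^sup>*\<^sup>* x y" using walk_Dsum[OF assms] rtranclp_power by metis
  then show "Dsum Ts x y \<le> gdist (cartprod Ts) x y"
    using Dsum_le_walk[OF assms(1) gdist_walk assms(2,3)] by blast
qed

lemma conn_cp:
  assumes "good Ts" "x \<in> verts (cartprod Ts)" "y \<in> verts (cartprod Ts)"
  shows "(adj (cartprod Ts))\<^sup>*\<^sup>* x y"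
  using walk_Dsum[OF assms] rtranclp_power by metis

lemma good_graph: "good Ts \<Longrightarrow> graph (cartprod Ts)"
  by (rule graph_cp) (auto simp: good_def)

lemma isoI:
  assumes "bij_betw f (verts G) (verts H)" "\<And>x y. x \<in> verts G \<Longrightarrow> y \<in> verts G \<Longrightarrow> adj G x y \<longleftrightarrow> adj H (f x) (f y)"
  shows "iso G H"
  using assms unfolding iso_def by blast

lemma iso_refl: "iso G G"
  by (rule isoI[where f=id]) auto

lemma iso_trans:
  assumes "iso G H" "iso H K"
  shows "iso G K"
proof -
  obtain f where f: "bij_betw f (verts G) (verts H)" "\<forall>x\<in>verts G. \<forall>y\<in>verts G. adj G x y \<longleftrightarrow> adj H (f x) (f y)"
    using assms(1) unfolding iso_def by blast
  obtain g where g: "bij_betw g (verts H) (verts K)" "\<forall>x\<in>verts H. \<forall>y\<in>verts H. adj H x y \<longleftrightarrow> adj K (g x) (g y)"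
    using assms(2) unfolding iso_def by blast
  show ?thesis
  proof (rule isoI[where f="g \<circ> f"])
    show "bij_betw (g \<circ> f) (verts G) (verts K)" using bij_betw_trans f(1) g(1) by blast
    fix x y assume xy: "x \<in> verts G" "y \<in> verts G"
    then have "f x \<in> verts H" "f y \<in> verts H" using f(1) bij_betwE by blast+
    then show "adj G x y \<longleftrightarrow> adj K ((g \<circ> f) x) ((g \<circ> f) y)"
      using f(2) g(2) xy by simp
  qed
qed

lemma iso_sym:
  assumes "iso G H"
  shows "iso H G"
proof -
  obtain f where f: "bij_betw f (verts G) (verts H)" "\<forall>x\<in>verts G. \<forall>y\<in>verts G. adj G x y \<longleftrightarrow> adj H (f x) (f y)"
    using assms(1) unfolding iso_def by blast
  let ?g = "inv_into (verts G) f"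
  show ?thesis
  proof (rule isoI[where f="?g"])
    show b: "bij_betw ?g (verts H) (verts G)" using bij_betw_inv_into f(1) by blast
    fix x y assume xy: "x \<in> verts H" "y \<in> verts H"
    have "?g x \<in> verts G" "?g y \<in> verts G" using b xy bij_betwE by blast+
    moreover have "f (?g x) = x" "f (?g y) = y" using f(1) xy by (auto simp: bij_betw_def f_inv_into_f)
    ultimately show "adj H x y \<longleftrightarrow> adj G (?g x) (?g y)" using f(2) by metis
  qed
qed

lemma iso_card: "iso G H \<Longrightarrow> card (verts G) = card (verts H)"
  unfolding iso_def using bij_betw_same_card by blast

lemma nat_copy:
  fixes H :: "'a graph"
  assumes "graph H"
  shows "\<exists>H' :: nat graph. graph H' \<and> iso H H'"
proof -
  obtain f :: "'a \<Rightarrow> nat" and n where f: "f ` verts H = {i. i < n}" "inj_on f (verts H)"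
    using finite_imp_inj_to_nat_seg graphD(1)[OF assms] by metis
  let ?g = "inv_into (verts H) f"
  define H' where "H' = (f ` verts H, \<lambda>a b. a \<in> f ` verts H \<and> b \<in> f ` verts H \<and> adj H (?g a) (?g b))"
  have vH': "verts H' = f ` verts H" unfolding H'_def verts_def by simp
  have aH': "adj H' a b \<longleftrightarrow> a \<in> f ` verts H \<and> b \<in> f ` verts H \<and> adj H (?g a) (?g b)" for a b
    unfolding H'_def adj_def by simp
  have gi: "?g a \<in> verts H" if "a \<in> f ` verts H" for a using that by (simp add: inv_into_into)
  have "graph H'" unfolding graph_def vH' aH'
    using f graphD[OF assms] gi by auto
  moreover have "iso H H'"
  proof (rule isoI[where f=f])
    show "bij_betw f (verts H) (verts H')" unfolding vH' using f(2) inj_on_imp_bij_betw by blast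
    fix x y assume "x \<in> verts H" "y \<in> verts H"
    then show "adj H x y \<longleftrightarrow> adj H' (f x) (f y)" unfolding aH' using f(2) by simp
  qed
  ultimately show ?thesis by blast
qed

lemma verts_cart: "verts (cart H K) = verts H \<times> verts K"
  unfolding cart_def verts_def by simp

lemma adj_cart: "adj (cart H K) (g, h) (g', h') \<longleftrightarrow>
   (g = g' \<and> g \<in> verts H \<and> adj K h h') \<or> (adj H g g' \<and> h = h' \<and> h \<in> verts K)"
  unfolding cart_def adj_def verts_def by simp

lemma iso_cart:
  assumes "iso H H'" "iso K K'"
  shows "iso (cart H K) (cart H' K')"
proof -
  obtain f where f: "bij_betw f (verts H) (verts H')" "\<forall>x\<in>verts H. \<forall>y\<in>verts H. adj H x y \<longleftrightarrow> adj H' (f x) (f y)"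
    using assms(1) unfolding iso_def by blast
  obtain g where g: "bij_betw g (verts K) (verts K')" "\<forall>x\<in>verts K. \<forall>y\<in>verts K. adj K x y \<longleftrightarrow> adj K' (g x) (g y)"
    using assms(2) unfolding iso_def by blast
  show ?thesis
  proof (rule isoI[where f="map_prod f g"])
    show "bij_betw (map_prod f g) (verts (cart H K)) (verts (cart H' K'))"
      unfolding verts_cart using bij_betw_map_prod f(1) g(1) by blast
    fix x y assume xy: "x \<in> verts (cart H K)" "y \<in> verts (cart H K)"
    obtain a b a' b' where xy': "x = (a, b)" "y = (a', b')" by fastforce
    have "(a,b) \<in> verts H \<times> verts K" "(a',b') \<in> verts H \<times> verts K" using xy xy' verts_cart by metis+
    then have v: "a \<in> verts H" "a' \<in> verts H" "b \<in> verts K" "b' \<in> verts K" by blast+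
    have fi: "f a = f a' \<longleftrightarrow> a = a'" using f(1) v unfolding bij_betw_def inj_on_def by blast
    have gi: "g b = g b' \<longleftrightarrow> b = b'" using g(1) v unfolding bij_betw_def inj_on_def by blast
    have "f a \<in> verts H'" "g b \<in> verts K'" using f(1) g(1) v bij_betwE by blast+
    then show "adj (cart H K) x y \<longleftrightarrow> adj (cart H' K') (map_prod f g x) (map_prod f g y)"
      unfolding xy' map_prod_simp adj_cart using fi gi f(2) g(2) v by auto
  qed
qed

lemma graph_cart:
  fixes H :: "'a graph" and K :: "'b graph"
  assumes "graph H" "graph K"
  shows "graph (cart H K)"
  unfolding graph_def verts_cart
proof (intro conjI allI impI)
  show "finite (verts H \<times> verts K)" using graphD(1)[OF assms(1)] graphD(1)[OF assms(2)] by (rule finite_cartesian_product)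
  fix x y assume a: "adj (cart H K) x y"
  obtain g h g' h' where xy: "x = (g, h)" "y = (g', h')" by fastforce
  show "x \<in> verts H \<times> verts K" "y \<in> verts H \<times> verts K" "adj (cart H K) y x"
    using a unfolding xy adj_cart using graphD[OF assms(1)] graphD[OF assms(2)] by auto
next
  fix x :: "'a \<times> 'b"
  obtain g h where xy: "x = (g, h)" by fastforce
  show "\<not> adj (cart H K) x x" unfolding xy adj_cart using graphD[OF assms(1)] graphD[OF assms(2)] by auto
qed

definition ind :: "'a graph \<Rightarrow> 'a set \<Rightarrow> 'a graph" where
  "ind G S = (S, \<lambda>x y. x \<in> S \<and> y \<in> S \<and> adj G x y)"

lemma verts_ind[simp]: "verts (ind G S) = S" unfolding ind_def verts_def by simp
lemma adj_ind: "adj (ind G S) x y \<longleftrightarrow> x \<in> S \<and> y \<in> S \<and> adj G x y" unfolding ind_def adj_def by simp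

lemma graph_ind:
  assumes "graph G" "S \<subseteq> verts G"
  shows "graph (ind G S)"
  unfolding graph_def verts_ind adj_ind using assms(2) graphD[OF assms(1)] finite_subset[OF assms(2)] by blast

lemma prime_no_split:
  fixes H :: "'b graph" and K :: "'c graph"
  assumes "prime_graph F" "graph H" "graph K" "iso F (cart H K)"
    "card (verts H) \<ge> 2" "card (verts K) \<ge> 2"
  shows False
proof -
  obtain H' :: "nat graph" where H': "graph H'" "iso H H'" using nat_copy[OF assms(2)] by blast
  obtain K' :: "nat graph" where K': "graph K'" "iso K K'" using nat_copy[OF assms(3)] by blast
  have i: "iso F (cart H' K')" using iso_trans[OF assms(4) iso_cart[OF H'(2) K'(2)]] .
  have cF: "card (verts F) = card (verts H) * card (verts K)"
    using iso_card[OF assms(4)] unfolding verts_cart card_cartesian_product .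
  have m1: "card (verts H) * 2 \<le> card (verts H) * card (verts K)" using assms(6) by simp
  have m2: "2 * card (verts K) \<le> card (verts H) * card (verts K)" using assms(5) by simp
  have "card (verts H) < card (verts F)" "card (verts K) < card (verts F)"
    using m1 m2 assms(5,6) cF by linarith+
  then have "\<not> iso H' F" "\<not> iso K' F"
    using iso_card H'(2) K'(2) by (metis less_irrefl)+
  then show False using assms(1) H'(1) K'(1) i unfolding prime_graph_def by blast
qed

definition lay :: "'a graph list \<Rightarrow> nat \<Rightarrow> 'a list \<Rightarrow> 'a list set" where
  "lay Ts m x = {z \<in> verts (cartprod Ts). \<forall>p<length Ts. p \<noteq> m \<longrightarrow> z!p = x!p}"

definition convex :: "'a graph \<Rightarrow> 'a set \<Rightarrow> bool" where
  "convex G S \<longleftrightarrow> S \<subseteq> verts G \<and> (\<forall>u\<in>S. \<forall>v\<in>S. \<forall>w\<in>verts G.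
      gdist G u w + gdist G w v = gdist G u v \<longrightarrow> w \<in> S)"

lemma lay_iso:
  assumes "good Ts" "x \<in> verts (cartprod Ts)" "m < length Ts"
  shows "iso (Ts!m) (ind (cartprod Ts) (lay Ts m x))"
proof (rule isoI[where f="\<lambda>a. x[m := a]"])
  have lx: "length x = length Ts" using assms(2) unfolding verts_cp by simp
  show "bij_betw (\<lambda>a. x[m := a]) (verts (Ts ! m)) (verts (ind (cartprod Ts) (lay Ts m x)))"
    unfolding verts_ind bij_betw_def
  proof (intro conjI)
    show "inj_on (\<lambda>a. x[m := a]) (verts (Ts ! m))"
      unfolding inj_on_def using assms(3) lx by (metis nth_list_update_eq)
    show "(\<lambda>a. x[m := a]) ` verts (Ts ! m) = lay Ts m x"
    proof
      show "(\<lambda>a. x[m := a]) ` verts (Ts ! m) \<subseteq> lay Ts m x"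
        unfolding lay_def using upd_in_cp[OF assms(2,3)] by auto
      show "lay Ts m x \<subseteq> (\<lambda>a. x[m := a]) ` verts (Ts ! m)"
      proof
        fix z assume z: "z \<in> lay Ts m x"
        then have zv: "z \<in> verts (cartprod Ts)" and zp: "\<forall>p<length Ts. p \<noteq> m \<longrightarrow> z!p = x!p"
          unfolding lay_def by auto
        have "z = x[m := z!m]"
          by (rule nth_equalityI) (use zv zp lx assms(3) in \<open>auto simp: verts_cp nth_list_update\<close>)
        moreover have "z!m \<in> verts (Ts!m)" using zv assms(3) unfolding verts_cp by auto
        ultimately show "z \<in> (\<lambda>a. x[m := a]) ` verts (Ts ! m)" by blast
      qed
    qed
  qed
  fix a b assume ab: "a \<in> verts (Ts!m)" "b \<in> verts (Ts!m)"
  have inl: "x[m := a] \<in> lay Ts m x" "x[m := b] \<in> lay Ts m x"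
    unfolding lay_def using upd_in_cp[OF assms(2,3)] ab by auto
  have g: "graph (Ts!m)" using goodD(1)[OF assms(1,3)] .
  show "adj (Ts!m) a b \<longleftrightarrow> adj (ind (cartprod Ts) (lay Ts m x)) (x[m := a]) (x[m := b])"
    unfolding adj_ind
  proof
    assume "adj (Ts!m) a b"
    then show "x[m := a] \<in> lay Ts m x \<and> x[m := b] \<in> lay Ts m x \<and> adj (cartprod Ts) (x[m := a]) (x[m := b])"
      using inl adj_upd_cp[OF assms(2,3) _ g] by blast
  next
    assume "x[m := a] \<in> lay Ts m x \<and> x[m := b] \<in> lay Ts m x \<and> adj (cartprod Ts) (x[m := a]) (x[m := b])"
    then obtain j where j: "j < length Ts" "adj (Ts!j) (x[m := a]!j) (x[m := b]!j)"
      "\<forall>l<length Ts. l \<noteq> j \<longrightarrow> x[m := a]!l = x[m := b]!l"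
      unfolding adj_cp by blast
    show "adj (Ts!m) a b"
    proof (cases "j = m")
      case True then show ?thesis using j lx by simp
    next
      case False
      then have "a = b" using j(3) assms(3) lx by (metis nth_list_update_eq)
      then have "x[m := a]!j = x[m := b]!j" by simp
      then show ?thesis using j(2) graphD(5)[OF goodD(1)[OF assms(1) j(1)]] by metis
    qed
  qed
qed

lemma iso_image_aut:
  assumes "automorphism G f" "S \<subseteq> verts G"
  shows "iso (ind G S) (ind G (f ` S))"
proof (rule isoI[where f=f])
  have inj: "inj_on f (verts G)" using assms(1) unfolding automorphism_def bij_betw_def by blast
  show "bij_betw f (verts (ind G S)) (verts (ind G (f ` S)))"
    unfolding verts_ind using inj_on_subset[OF inj assms(2)] inj_on_imp_bij_betw by blast
  fix x y assume xy: "x \<in> verts (ind G S)" "y \<in> verts (ind G S)"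
  then have "x \<in> verts G" "y \<in> verts G" using assms(2) by auto
  then show "adj (ind G S) x y \<longleftrightarrow> adj (ind G (f ` S)) (f x) (f y)"
    unfolding adj_ind using xy assms(1) unfolding automorphism_def by auto
qed

lemma lay_convex:
  assumes "good Ts" "x \<in> verts (cartprod Ts)" "m < length Ts"
  shows "convex (cartprod Ts) (lay Ts m x)"
  unfolding convex_def
proof (intro conjI ballI impI)
  show "lay Ts m x \<subseteq> verts (cartprod Ts)" unfolding lay_def by auto
  fix u v w assume u: "u \<in> lay Ts m x" and v: "v \<in> lay Ts m x" and w: "w \<in> verts (cartprod Ts)"
    and eq: "gdist (cartprod Ts) u w + gdist (cartprod Ts) w v = gdist (cartprod Ts) u v"
  have uv: "u \<in> verts (cartprod Ts)" "v \<in> verts (cartprod Ts)" using u v unfolding lay_def by auto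
  have e1: "Dsum Ts u w + Dsum Ts w v = Dsum Ts u v"
    using eq by (simp only: gdist_cp[OF assms(1) uv(1) w] gdist_cp[OF assms(1) w uv(2)] gdist_cp[OF assms(1) uv])
  have eq2: "(\<Sum>p<length Ts. gdist (Ts!p) (u!p) (v!p)) =
     (\<Sum>p<length Ts. gdist (Ts!p) (u!p) (w!p) + gdist (Ts!p) (w!p) (v!p))"
    using e1 by (simp only: Dsum_def sum.distrib)
  have comp: "u!p \<in> verts (Ts!p)" "v!p \<in> verts (Ts!p)" "w!p \<in> verts (Ts!p)" if "p < length Ts" for p
    using that uv w unfolding verts_cp by auto
  have "\<forall>p<length Ts. p \<noteq> m \<longrightarrow> w!p = x!p"
  proof (intro allI impI)
    fix p assume p: "p < length Ts" "p \<noteq> m"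
    have tri: "gdist (Ts!q) (u!q) (v!q) \<le> gdist (Ts!q) (u!q) (w!q) + gdist (Ts!q) (w!q) (v!q)"
      if "q \<in> {..<length Ts}" for q
    proof -
      have q: "q < length Ts" using that by simp
      show ?thesis by (rule gdist_triangle[OF goodD(2)[OF assms(1) q comp(1)[OF q] comp(3)[OF q]]
         goodD(2)[OF assms(1) q comp(3)[OF q] comp(2)[OF q]]])
    qed
    have "gdist (Ts!p) (u!p) (v!p) = gdist (Ts!p) (u!p) (w!p) + gdist (Ts!p) (w!p) (v!p)"
      using sum_mono_inv[OF eq2 tri] p(1) by simp
    moreover have "u!p = x!p" "v!p = x!p" using u v p unfolding lay_def by blast+
    ultimately have "gdist (Ts!p) (u!p) (w!p) = 0" by simp
    then have "u!p = w!p" by (rule gdist_zero[OF goodD(2)[OF assms(1) p(1) comp(1,3)[OF p(1)]]])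
    then show "w!p = x!p" using \<open>u!p = x!p\<close> by simp
  qed
  then show "w \<in> lay Ts m x" unfolding lay_def using w by simp
qed

lemma aut_convex:
  assumes "automorphism G f" "graph G" "convex G S"
  shows "convex G (f ` S)"
  unfolding convex_def
proof (intro conjI ballI impI)
  have S: "S \<subseteq> verts G" using assms(3) unfolding convex_def by blast
  then show "f ` S \<subseteq> verts G" using aut_in[OF assms(1)] by blast
  fix u' v' w' assume u': "u' \<in> f ` S" and v': "v' \<in> f ` S" and w': "w' \<in> verts G"
    and eq: "gdist G u' w' + gdist G w' v' = gdist G u' v'"
  obtain u v where uv: "u \<in> S" "v \<in> S" "u' = f u" "v' = f v" using u' v' by blast
  let ?w = "inv_into (verts G) f w'"
  have wv: "?w \<in> verts G" "f ?w = w'"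
    using aut_in[OF aut_inv(1)[OF assms(1)] w'] aut_inv(3)[OF assms(1) w'] by auto
  have uvG: "u \<in> verts G" "v \<in> verts G" using uv(1,2) S by auto
  have "gdist G u' w' = gdist G u ?w" using aut_gdist[OF assms(1,2) uvG(1) wv(1)] uv(3) wv(2) by simp
  moreover have "gdist G w' v' = gdist G ?w v" using aut_gdist[OF assms(1,2) wv(1) uvG(2)] uv(4) wv(2) by simp
  moreover have "gdist G u' v' = gdist G u v" using aut_gdist[OF assms(1,2) uvG] uv(3,4) by simp
  ultimately have "gdist G u ?w + gdist G ?w v = gdist G u v" using eq by simp
  then have "?w \<in> S" using assms(3) uv(1,2) wv(1) unfolding convex_def by blast
  then show "w' \<in> f ` S" using wv(2) by (metis image_eqI)
qed

lemma convex_upd: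
  assumes "good Ts" "convex (cartprod Ts) S" "u \<in> S" "v \<in> S" "l < length Ts"
  shows "u[l := v!l] \<in> S"
proof -
  have S: "S \<subseteq> verts (cartprod Ts)" using assms(2) unfolding convex_def by blast
  have uv: "u \<in> verts (cartprod Ts)" "v \<in> verts (cartprod Ts)" using S assms(3,4) by auto
  have lu: "length u = length Ts" using uv(1) unfolding verts_cp by simp
  have vl: "v!l \<in> verts (Ts!l)" using uv(2) assms(5) unfolding verts_cp by simp
  let ?w = "u[l := v!l]"
  have w: "?w \<in> verts (cartprod Ts)" using upd_in_cp[OF uv(1) assms(5) vl] .
  have d1: "Dsum Ts u ?w = (\<Sum>p<length Ts. if p = l then gdist (Ts!p) (u!p) (v!p) else 0)"
    unfolding Dsum_def by (rule sum.cong) (use lu assms(5) in \<open>auto simp: nth_list_update\<close>)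
  have d2: "Dsum Ts ?w v = (\<Sum>p<length Ts. if p = l then 0 else gdist (Ts!p) (u!p) (v!p))"
    unfolding Dsum_def by (rule sum.cong) (use lu assms(5) in \<open>auto simp: nth_list_update\<close>)
  have "Dsum Ts u ?w + Dsum Ts ?w v = (\<Sum>p<length Ts. (if p = l then gdist (Ts!p) (u!p) (v!p) else 0)
      + (if p = l then 0 else gdist (Ts!p) (u!p) (v!p)))"
    by (simp only: d1 d2 sum.distrib)
  also have "\<dots> = Dsum Ts u v" unfolding Dsum_def by (rule sum.cong) auto
  finally have "Dsum Ts u ?w + Dsum Ts ?w v = Dsum Ts u v" .
  then have "gdist (cartprod Ts) u ?w + gdist (cartprod Ts) ?w v = gdist (cartprod Ts) u v"
    using gdist_cp[OF assms(1)] uv w by simp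
  then show ?thesis using assms(2,3,4) w unfolding convex_def by blast
qed

lemma upd_eq_iff:
  assumes "length s = length s'" "l < length s"
  shows "s = s' \<longleftrightarrow> s!l = s'!l \<and> s[l := c] = s'[l := c]"
proof
  assume h: "s!l = s'!l \<and> s[l := c] = s'[l := c]"
  have "s = (s[l := c])[l := s!l]" by simp
  also have "\<dots> = (s'[l := c])[l := s'!l]" using h by simp
  also have "\<dots> = s'" by simp
  finally show "s = s'" .
qed simp

lemma adj_split:
  assumes "good Ts" "s \<in> verts (cartprod Ts)" "s' \<in> verts (cartprod Ts)" "l < length Ts" "c \<in> verts (Ts!l)"
  shows "adj (cartprod Ts) s s' \<longleftrightarrow>
     (s!l = s'!l \<and> adj (cartprod Ts) (s[l := c]) (s'[l := c])) \<or> (adj (Ts!l) (s!l) (s'!l) \<and> s[l := c] = s'[l := c])"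
proof -
  have ls: "length s = length Ts" "length s' = length Ts" using assms(2,3) unfolding verts_cp by auto
  have uv: "s[l := c] \<in> verts (cartprod Ts)" "s'[l := c] \<in> verts (cartprod Ts)"
    using upd_in_cp[OF assms(2,4,5)] upd_in_cp[OF assms(3,4,5)] by blast+
  show ?thesis
  proof
    assume "adj (cartprod Ts) s s'"
    then obtain j where j: "j < length Ts" "adj (Ts!j) (s!j) (s'!j)" "\<forall>p<length Ts. p \<noteq> j \<longrightarrow> s!p = s'!p"
      unfolding adj_cp by blast
    show "(s!l = s'!l \<and> adj (cartprod Ts) (s[l := c]) (s'[l := c])) \<or> (adj (Ts!l) (s!l) (s'!l) \<and> s[l := c] = s'[l := c])"
    proof (cases "j = l")
      case True
      have "s[l := c] = s'[l := c]"
        by (rule nth_equalityI) (use ls j True in \<open>auto simp: nth_list_update\<close>)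
      then show ?thesis using j True by simp
    next
      case False
      have "adj (cartprod Ts) (s[l := c]) (s'[l := c])"
      proof -
        have a1: "adj (Ts!j) (s[l := c]!j) (s'[l := c]!j)" using j False by simp
        have a2: "\<forall>p<length Ts. p \<noteq> j \<longrightarrow> s[l := c]!p = s'[l := c]!p" 
        proof (intro allI impI)
          fix p assume p: "p < length Ts" "p \<noteq> j"
          show "s[l := c]!p = s'[l := c]!p"
            by (cases "p = l") (use j(3) p ls in simp_all)
        qed
        show ?thesis unfolding adj_cp using uv j(1) a1 a2 by blast
      qed
      then show ?thesis using j False assms(4) by simp
    qed
  next
    assume "(s!l = s'!l \<and> adj (cartprod Ts) (s[l := c]) (s'[l := c])) \<or> (adj (Ts!l) (s!l) (s'!l) \<and> s[l := c] = s'[l := c])"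
    then show "adj (cartprod Ts) s s'"
    proof
      assume h: "s!l = s'!l \<and> adj (cartprod Ts) (s[l := c]) (s'[l := c])"
      then obtain j where j: "j < length Ts" "adj (Ts!j) (s[l := c]!j) (s'[l := c]!j)"
        "\<forall>p<length Ts. p \<noteq> j \<longrightarrow> s[l := c]!p = s'[l := c]!p"
        unfolding adj_cp by blast
      have jl: "j \<noteq> l"
      proof
        assume "j = l"
        then have "adj (Ts!l) c c" using j(2) ls assms(4) by simp
        then show False using graphD(5)[OF goodD(1)[OF assms(1,4)]] by blast
      qed
      have "\<forall>p<length Ts. p \<noteq> j \<longrightarrow> s!p = s'!p"
      proof (intro allI impI)
        fix p assume p: "p < length Ts" "p \<noteq> j"
        show "s!p = s'!p"
        proof (cases "p = l")
          case True then show ?thesis using h by simp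
        next
          case False then show ?thesis using j(3) p ls by (metis nth_list_update_neq)
        qed
      qed
      moreover have "adj (Ts!j) (s!j) (s'!j)" using j(2) jl by simp
      ultimately show ?thesis unfolding adj_cp using assms(2,3) j(1) by blast
    next
      assume h: "adj (Ts!l) (s!l) (s'!l) \<and> s[l := c] = s'[l := c]"
      have "\<forall>p<length Ts. p \<noteq> l \<longrightarrow> s!p = s'!p"
        using h ls by (metis nth_list_update_neq)
      then show ?thesis unfolding adj_cp using assms(2,3,4) h by blast
    qed
  qed
qed

lemma img_split:
  assumes good: "good Ts" and conv: "convex (cartprod Ts) S" and l: "l < length Ts"
  shows "(\<lambda>s. (s!l, s[l := c])) ` S = ((\<lambda>s. s!l) ` S) \<times> ((\<lambda>s. s[l := c]) ` S)"
proof
  have SV: "S \<subseteq> verts (cartprod Ts)" using conv unfolding convex_def by blast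
  show "(\<lambda>s. (s!l, s[l := c])) ` S \<subseteq> ((\<lambda>s. s!l) ` S) \<times> ((\<lambda>s. s[l := c]) ` S)"
    by blast
  show "((\<lambda>s. s!l) ` S) \<times> ((\<lambda>s. s[l := c]) ` S) \<subseteq> (\<lambda>s. (s!l, s[l := c])) ` S"
  proof
    fix z assume "z \<in> ((\<lambda>s. s!l) ` S) \<times> ((\<lambda>s. s[l := c]) ` S)"
    then obtain s1 s2 where s: "s1 \<in> S" "s2 \<in> S" "z = (s1!l, s2[l := c])" by blast
    have in2: "s2[l := s1!l] \<in> S" using convex_upd[OF good conv s(2,1) l] .
    have "length s2 = length Ts" using s(2) SV unfolding verts_cp by auto
    then have "((s2[l := s1!l])!l, (s2[l := s1!l])[l := c]) = z" using s(3) l by simp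
    then show "z \<in> (\<lambda>s. (s!l, s[l := c])) ` S" using in2 by (intro image_eqI[where x="s2[l := s1!l]"]) simp_all
  qed
qed

definition allprime :: "'a graph list \<Rightarrow> bool" where
  "allprime Ts \<longleftrightarrow> (\<forall>j<length Ts. prime_graph (Ts!j))"

lemma aut_layer_sub:
  assumes good: "good Ts" and pr: "allprime Ts" and aut: "automorphism (cartprod Ts) f"
    and xv: "x \<in> verts (cartprod Ts)" and yv: "y \<in> verts (cartprod Ts)"
    and m: "m < length Ts" and xym: "x!m \<noteq> y!m" and xy: "\<forall>p<length Ts. p \<noteq> m \<longrightarrow> x!p = y!p"
    and l: "l < length Ts" and fxy: "\<forall>p<length Ts. p \<noteq> l \<longrightarrow> f x!p = f y!p"
  shows "f ` lay Ts m x \<subseteq> lay Ts l (f x)"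
proof (rule ccontr)
  let ?G = "cartprod Ts"
  let ?S = "f ` lay Ts m x"
  assume nsub: "\<not> ?S \<subseteq> lay Ts l (f x)"
  have gG: "graph ?G" using good_graph[OF good] .
  have conv: "convex ?G ?S" using aut_convex[OF aut gG lay_convex[OF good xv m]] .
  have SV: "?S \<subseteq> verts ?G" using conv unfolding convex_def by blast
  have xl: "x \<in> lay Ts m x" unfolding lay_def using xv by simp
  have yl: "y \<in> lay Ts m x" unfolding lay_def using yv xy by simp
  have fx: "f x \<in> ?S" "f y \<in> ?S" using xl yl by blast+
  have fxv: "f x \<in> verts ?G" "f y \<in> verts ?G" using aut_in[OF aut] xv yv by blast+
  have lens: "length (f x) = length Ts" "length (f y) = length Ts" using fxv unfolding verts_cp by auto
  have "x \<noteq> y" using xym by blast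
  then have "f x \<noteq> f y" using aut xv yv unfolding automorphism_def bij_betw_def inj_on_def by blast
  then have fxyl: "f x!l \<noteq> f y!l" using fxy lens by (metis nth_equalityI)
  let ?c = "f x!l"
  have cv: "?c \<in> verts (Ts!l)" using fxv(1) l unfolding verts_cp by simp
  obtain u p where u: "u \<in> ?S" "p < length Ts" "p \<noteq> l" "u!p \<noteq> f x!p"
    using nsub SV unfolding lay_def by blast
  have uV: "u \<in> verts ?G" using u(1) SV by blast
  have lu: "length u = length Ts" using uV unfolding verts_cp by simp
  let ?X = "(\<lambda>s. s!l) ` ?S"
  let ?Y = "(\<lambda>s. s[l := ?c]) ` ?S"
  have finS: "finite ?S" using graphD(1)[OF gG] SV finite_subset by blast
  have XV: "?X \<subseteq> verts (Ts!l)" using SV l unfolding verts_cp by auto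
  have YV: "?Y \<subseteq> verts ?G" using SV upd_in_cp[OF _ l cv] by blast
  have cX: "card ?X \<ge> 2"
  proof -
    have "{f x!l, f y!l} \<subseteq> ?X" using fx by blast
    moreover have "finite ?X" using finS by blast
    ultimately have "card {f x!l, f y!l} \<le> card ?X" by (rule card_mono[rotated])
    then show ?thesis using fxyl by simp
  qed
  have cY: "card ?Y \<ge> 2"
  proof -
    have e1: "(f x)[l := ?c] = f x" by simp
    have "u[l := ?c] \<noteq> f x" using u(2,3,4) lu by (metis nth_list_update_neq)
    moreover have "{f x, u[l := ?c]} \<subseteq> ?Y"
    proof -
      have "f x \<in> ?Y" by (rule image_eqI[where x="f x"]) (use e1 fx(1) in auto)
      moreover have "u[l := ?c] \<in> ?Y" using u(1) by blast
      ultimately show ?thesis by blast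
    qed
    moreover have "finite ?Y" using finS by blast
    ultimately show ?thesis by (metis card_mono card_2_iff)
  qed
  let ?phi = "\<lambda>s. (s!l, s[l := ?c])"
  have iso1: "iso (ind ?G ?S) (cart (ind (Ts!l) ?X) (ind ?G ?Y))"
  proof (rule isoI[where f="?phi"])
    show "bij_betw ?phi (verts (ind ?G ?S)) (verts (cart (ind (Ts!l) ?X) (ind ?G ?Y)))"
      unfolding verts_ind verts_cart bij_betw_def
    proof (intro conjI)
      show "inj_on ?phi ?S"
      proof (rule inj_onI)
        fix s s' assume ss: "s \<in> ?S" "s' \<in> ?S" "?phi s = ?phi s'"
        have "length s = length Ts" "length s' = length Ts" using ss(1,2) SV unfolding verts_cp by auto
        then show "s = s'" using upd_eq_iff[of s s' l ?c] ss(3) l by simp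
      qed
      show "?phi ` ?S = ?X \<times> ?Y" by (rule img_split[OF good conv l])
    qed
  next
    fix s s' assume ss: "s \<in> verts (ind ?G ?S)" "s' \<in> verts (ind ?G ?S)"
    then have ss': "s \<in> ?S" "s' \<in> ?S" by auto
    have sv: "s \<in> verts ?G" "s' \<in> verts ?G" using ss' SV by auto
    have mem: "s!l \<in> ?X" "s'!l \<in> ?X" "s[l := ?c] \<in> ?Y" "s'[l := ?c] \<in> ?Y" using ss' by blast+
    have "adj (ind ?G ?S) s s' \<longleftrightarrow> adj ?G s s'" using ss' by (simp add: adj_ind)
    also have "\<dots> \<longleftrightarrow> (s!l = s'!l \<and> adj ?G (s[l := ?c]) (s'[l := ?c])) \<or> (adj (Ts!l) (s!l) (s'!l) \<and> s[l := ?c] = s'[l := ?c])"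
      by (rule adj_split[OF good sv l cv])
    also have "\<dots> \<longleftrightarrow> adj (cart (ind (Ts!l) ?X) (ind ?G ?Y)) (?phi s) (?phi s')"
      by (simp only: adj_cart adj_ind verts_ind mem simp_thms)
    finally show "adj (ind ?G ?S) s s' \<longleftrightarrow> adj (cart (ind (Ts!l) ?X) (ind ?G ?Y)) (?phi s) (?phi s')" .
  qed
  have iso0: "iso (Ts!m) (ind ?G ?S)"
    using iso_trans[OF lay_iso[OF good xv m] iso_image_aut[OF aut]] unfolding lay_def by blast
  have pm: "prime_graph (Ts!m)" using pr m unfolding allprime_def by blast
  have g1: "graph (ind (Ts!l) ?X)" using graph_ind[OF goodD(1)[OF good l] XV] .
  have g2: "graph (ind ?G ?Y)" using graph_ind[OF gG YV] .
  show False by (rule prime_no_split[OF pm g1 g2 iso_trans[OF iso0 iso1]]) (use cX cY in simp_all)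
qed

lemma lay_sub: "lay Ts m x \<subseteq> verts (cartprod Ts)" unfolding lay_def by blast

lemma edge_iso:
  assumes good: "good Ts" and pr: "allprime Ts" and aut: "automorphism (cartprod Ts) f"
    and xv: "x \<in> verts (cartprod Ts)" and yv: "y \<in> verts (cartprod Ts)"
    and m: "m < length Ts" and xym: "x!m \<noteq> y!m" and xy: "\<forall>p<length Ts. p \<noteq> m \<longrightarrow> x!p = y!p"
    and l: "l < length Ts" and fxy: "\<forall>p<length Ts. p \<noteq> l \<longrightarrow> f x!p = f y!p"
  shows "iso (Ts!m) (Ts!l)"
proof -
  let ?G = "cartprod Ts"
  let ?g = "inv_into (verts ?G) f"
  have gG: "graph ?G" using good_graph[OF good] .
  have fin: "finite (verts ?G)" using graphD(1)[OF gG] .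
  have A1: "f ` lay Ts m x \<subseteq> lay Ts l (f x)" using aut_layer_sub[OF assms] .
  have fxv: "f x \<in> verts ?G" "f y \<in> verts ?G" using aut_in[OF aut] xv yv by blast+
  have lens: "length (f x) = length Ts" "length (f y) = length Ts" using fxv unfolding verts_cp by auto
  have "x \<noteq> y" using xym by blast
  then have "f x \<noteq> f y" using aut xv yv unfolding automorphism_def bij_betw_def inj_on_def by blast
  then have fxyl: "f x!l \<noteq> f y!l" using fxy lens by (metis nth_equalityI)
  have autg: "automorphism ?G ?g" using aut_inv(1)[OF aut] .
  have gx: "?g (f x) = x" "?g (f y) = y" using aut_inv(2)[OF aut] xv yv by blast+
  have xy': "\<forall>p<length Ts. p \<noteq> m \<longrightarrow> ?g (f x)!p = ?g (f y)!p" using xy gx by simp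
  have A2: "?g ` lay Ts l (f x) \<subseteq> lay Ts m (?g (f x))"
    using aut_layer_sub[OF good pr autg fxv l fxyl fxy m xy'] .
  then have A2': "?g ` lay Ts l (f x) \<subseteq> lay Ts m x" using gx by simp
  have finl: "finite (lay Ts l (f x))" "finite (lay Ts m x)"
    using finite_subset[OF lay_sub fin] by blast+
  have injf: "inj_on f (verts ?G)" using aut unfolding automorphism_def bij_betw_def by blast
  have injg: "inj_on ?g (verts ?G)" using autg unfolding automorphism_def bij_betw_def by blast
  have c1: "card (lay Ts l (f x)) \<le> card (lay Ts m x)"
  proof -
    have "card (lay Ts l (f x)) = card (?g ` lay Ts l (f x))"
      using card_image[OF inj_on_subset[OF injg lay_sub]] by simp
    also have "\<dots> \<le> card (lay Ts m x)" using card_mono[OF finl(2) A2'] .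
    finally show ?thesis .
  qed
  have c2: "card (f ` lay Ts m x) = card (lay Ts m x)"
    using card_image[OF inj_on_subset[OF injf lay_sub]] .
  have eq: "f ` lay Ts m x = lay Ts l (f x)"
    using card_subset_eq[OF finl(1) A1] c1 c2 card_mono[OF finl(1) A1] by linarith
  have "iso (Ts!m) (ind ?G (f ` lay Ts m x))"
    using iso_trans[OF lay_iso[OF good xv m] iso_image_aut[OF aut lay_sub]] .
  then have "iso (Ts!m) (ind ?G (lay Ts l (f x)))" using eq by simp
  then show ?thesis using iso_trans iso_sym[OF lay_iso[OF good fxv(1) l]] by blast
qed

definition thP :: "'a graph \<Rightarrow> nat \<Rightarrow> bool" where
  "thP G t \<longleftrightarrow> t \<ge> 1 \<and> (\<forall>k\<ge>t. \<forall>c :: 'a \<Rightarrow> nat. card (c ` verts G) = k \<longrightarrow> distinguishing G c)"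

lemma dist_threshold_thP: "dist_threshold G = (LEAST t. thP G t)"
  unfolding dist_threshold_def thP_def by simp

lemma thP_ex:
  assumes "finite (verts G)"
  shows "thP G (card (verts G) + 1)"
  unfolding thP_def
proof (intro conjI allI impI)
  fix k and c :: "'a \<Rightarrow> nat" assume "card (verts G) + 1 \<le> k" "card (c ` verts G) = k"
  moreover have "card (c ` verts G) \<le> card (verts G)" using card_image_le[OF assms] .
  ultimately show "distinguishing G c" by simp
qed simp

lemma theta_P:
  assumes "finite (verts G)"
  shows "thP G (dist_threshold G)" "dist_threshold G \<ge> 1"
proof -
  show "thP G (dist_threshold G)" unfolding dist_threshold_thP by (rule LeastI[where P="thP G", OF thP_ex[OF assms]])
  then show "dist_threshold G \<ge> 1" unfolding thP_def by simp
qed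

lemma theta_nondist:
  assumes "finite (verts G)" "\<not> distinguishing G c"
  shows "card (c ` verts G) + 1 \<le> dist_threshold G"
proof (rule ccontr)
  assume "\<not> card (c ` verts G) + 1 \<le> dist_threshold G"
  then have "card (c ` verts G) \<ge> dist_threshold G" by simp
  then show False using theta_P(1)[OF assms(1)] assms(2) unfolding thP_def by blast
qed

lemma theta_upper:
  assumes "finite (verts G)" "\<And>c. \<not> distinguishing G c \<Longrightarrow> card (c ` verts G) \<le> s"
  shows "dist_threshold G \<le> s + 1"
proof -
  have "thP G (s + 1)" unfolding thP_def using assms(2) by fastforce
  then show ?thesis unfolding dist_threshold_thP by (rule Least_le)
qed

lemma theta_ge2:
  assumes "finite (verts G)" "dist_threshold G \<ge> 2"
  shows "\<exists>c. \<not> distinguishing G c \<and> card (c ` verts G) = dist_threshold G - 1"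
proof -
  have "\<not> thP G (dist_threshold G - 1)"
    using not_less_Least[of "dist_threshold G - 1" "thP G"] assms(2) unfolding dist_threshold_thP by simp
  then obtain k c where kc: "k \<ge> dist_threshold G - 1" "card (c ` verts G) = k" "\<not> distinguishing G c"
    unfolding thP_def using assms(2) by auto
  have "k + 1 \<le> dist_threshold G" using theta_nondist[OF assms(1) kc(3)] kc(2) by simp
  then show ?thesis using kc by (intro exI[of _ c]) simp
qed

lemma nondistD:
  assumes "\<not> distinguishing G c"
  obtains f v where "automorphism G f" "\<And>w. w \<in> verts G \<Longrightarrow> c (f w) = c w" "v \<in> verts G" "f v \<noteq> v"
  using assms unfolding distinguishing_def by blast

lemma nondistI:
  assumes "automorphism G f" "\<And>w. w \<in> verts G \<Longrightarrow> c (f w) = c w" "v \<in> verts G" "f v \<noteq> v"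
  shows "\<not> distinguishing G c"
  using assms unfolding distinguishing_def by blast

lemma conj_aut:
  assumes phi: "\<And>x. x \<in> verts G \<Longrightarrow> phi x \<in> verts H" and psi: "\<And>y. y \<in> verts H \<Longrightarrow> psi y \<in> verts G"
    and pp: "\<And>x. x \<in> verts G \<Longrightarrow> psi (phi x) = x" and qq: "\<And>y. y \<in> verts H \<Longrightarrow> phi (psi y) = y"
    and ad: "\<And>x y. x \<in> verts G \<Longrightarrow> y \<in> verts G \<Longrightarrow> adj G x y \<longleftrightarrow> adj H (phi x) (phi y)"
    and aut: "automorphism G f"
  shows "automorphism H (phi \<circ> f \<circ> psi)"
  unfolding automorphism_def
proof (intro conjI ballI)
  have fb: "bij_betw f (verts G) (verts G)" using aut unfolding automorphism_def by blast
  have fin: "\<And>x. x \<in> verts G \<Longrightarrow> f x \<in> verts G" using aut_in[OF aut] .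
  show "bij_betw (phi \<circ> f \<circ> psi) (verts H) (verts H)"
    unfolding bij_betw_def
  proof (intro conjI)
    show "inj_on (phi \<circ> f \<circ> psi) (verts H)"
    proof (rule inj_onI)
      fix y y' assume y: "y \<in> verts H" "y' \<in> verts H" "(phi \<circ> f \<circ> psi) y = (phi \<circ> f \<circ> psi) y'"
      then have "psi (phi (f (psi y))) = psi (phi (f (psi y')))" by simp
      then have "f (psi y) = f (psi y')" using pp fin psi y by simp
      then have "psi y = psi y'" using fb psi y unfolding bij_betw_def inj_on_def by blast
      then show "y = y'" using qq y by metis
    qed
    show "(phi \<circ> f \<circ> psi) ` verts H = verts H"
    proof
      show "(phi \<circ> f \<circ> psi) ` verts H \<subseteq> verts H" using phi fin psi by auto
      show "verts H \<subseteq> (phi \<circ> f \<circ> psi) ` verts H"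
      proof
        fix y assume y: "y \<in> verts H"
        have "psi y \<in> f ` verts G" using fb psi[OF y] unfolding bij_betw_def by blast
        then obtain z where z: "z \<in> verts G" "psi y = f z" by blast
        have "(phi \<circ> f \<circ> psi) (phi z) = y" using z(2)[symmetric] qq[OF y] pp[OF z(1)] by simp
        moreover have "phi z \<in> verts H" using phi z(1) .
        ultimately show "y \<in> (phi \<circ> f \<circ> psi) ` verts H" by (intro image_eqI[where x="phi z"]) simp_all
      qed
    qed
  qed
  fix y y' assume y: "y \<in> verts H" "y' \<in> verts H"
  have "adj H y y' \<longleftrightarrow> adj G (psi y) (psi y')" using ad[OF psi[OF y(1)] psi[OF y(2)]] qq y by simp
  also have "\<dots> \<longleftrightarrow> adj G (f (psi y)) (f (psi y'))" using aut psi y unfolding automorphism_def by blast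
  also have "\<dots> \<longleftrightarrow> adj H ((phi \<circ> f \<circ> psi) y) ((phi \<circ> f \<circ> psi) y')" using ad fin psi y by simp
  finally show "adj H y y' \<longleftrightarrow> adj H ((phi \<circ> f \<circ> psi) y) ((phi \<circ> f \<circ> psi) y')" .
qed

lemma transfer_nd:
  assumes phi: "\<And>x. x \<in> verts G \<Longrightarrow> phi x \<in> verts H" and psi: "\<And>y. y \<in> verts H \<Longrightarrow> psi y \<in> verts G"
    and pp: "\<And>x. x \<in> verts G \<Longrightarrow> psi (phi x) = x" and qq: "\<And>y. y \<in> verts H \<Longrightarrow> phi (psi y) = y"
    and ad: "\<And>x y. x \<in> verts G \<Longrightarrow> y \<in> verts G \<Longrightarrow> adj G x y \<longleftrightarrow> adj H (phi x) (phi y)"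
    and nd: "\<not> distinguishing G c"
  shows "\<not> distinguishing H (c \<circ> psi)" "card ((c \<circ> psi) ` verts H) = card (c ` verts G)"
proof -
  obtain f v where f: "automorphism G f" "\<And>w. w \<in> verts G \<Longrightarrow> c (f w) = c w" "v \<in> verts G" "f v \<noteq> v"
    using nondistD[OF nd] by blast
  have a: "automorphism H (phi \<circ> f \<circ> psi)" by (rule conj_aut[OF phi psi pp qq ad f(1)])
  show "\<not> distinguishing H (c \<circ> psi)"
  proof (rule nondistI[OF a _ phi[OF f(3)]])
    fix w assume w: "w \<in> verts H"
    show "(c \<circ> psi) ((phi \<circ> f \<circ> psi) w) = (c \<circ> psi) w"
      using pp[OF aut_in[OF f(1) psi[OF w]]] f(2)[OF psi[OF w]] by simp
  next
    have "psi ((phi \<circ> f \<circ> psi) (phi v)) = f v" using pp f(3) aut_in[OF f(1) f(3)] by simp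
    then show "(phi \<circ> f \<circ> psi) (phi v) \<noteq> phi v" using f(4) pp[OF f(3)] by metis
  qed
  have "psi ` verts H = verts G"
  proof
    show "psi ` verts H \<subseteq> verts G" using psi by blast
    show "verts G \<subseteq> psi ` verts H"
    proof
      fix x assume x: "x \<in> verts G"
      show "x \<in> psi ` verts H" using pp[OF x] phi[OF x] by (intro image_eqI[where x="phi x"]) simp_all
    qed
  qed
  then have "(c \<circ> psi) ` verts H = c ` verts G" by (simp only: image_comp[symmetric])
  then show "card ((c \<circ> psi) ` verts H) = card (c ` verts G)" by simp
qed

lemma adj_cart_fst:
  assumes "graph R" "r \<in> verts R"
  shows "adj (cart A R) (a, r) (a', r) \<longleftrightarrow> adj A a a'"
  unfolding adj_cart using assms graphD(5)[OF assms(1)] by blast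

lemma adj_cart_snd:
  assumes "graph A" "a \<in> verts A"
  shows "adj (cart A R) (a, r) (a, r') \<longleftrightarrow> adj R r r'"
  unfolding adj_cart using assms graphD(5)[OF assms(1)] by blast

lemma inj_self_bij:
  assumes "finite S" "inj_on g S" "\<And>x. x \<in> S \<Longrightarrow> g x \<in> S"
  shows "bij_betw g S S"
proof -
  have sub: "g ` S \<subseteq> S" using assms(3) by blast
  have "card (g ` S) = card S" using card_image[OF assms(2)] .
  then have "g ` S = S" using card_subset_eq[OF assms(1) sub] by simp
  then show ?thesis using assms(2) unfolding bij_betw_def by blast
qed

lemma prod_form:
  fixes A :: "'b graph" and R :: "'c graph"
  assumes gA: "graph A" and gR: "graph R"
    and cA: "\<And>a a'. a \<in> verts A \<Longrightarrow> a' \<in> verts A \<Longrightarrow> (adj A)\<^sup>*\<^sup>* a a'"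
    and cR: "\<And>r r'. r \<in> verts R \<Longrightarrow> r' \<in> verts R \<Longrightarrow> (adj R)\<^sup>*\<^sup>* r r'"
    and a0: "a0 \<in> verts A" and r0: "r0 \<in> verts R"
    and aut: "automorphism (cart A R) f"
    and pres1: "\<And>u v. adj (cart A R) u v \<Longrightarrow> fst u = fst v \<Longrightarrow> fst (f u) = fst (f v)"
    and pres2: "\<And>u v. adj (cart A R) u v \<Longrightarrow> snd u = snd v \<Longrightarrow> snd (f u) = snd (f v)"
  shows "\<exists>\<alpha> \<beta>. automorphism A \<alpha> \<and> automorphism R \<beta> \<and> (\<forall>a\<in>verts A. \<forall>r\<in>verts R. f (a, r) = (\<alpha> a, \<beta> r))"
proof -
  have C1: "fst (f (a, r)) = fst (f (a, r'))" if a: "a \<in> verts A" and w: "(adj R)\<^sup>*\<^sup>* r r'" for a r r'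
    using w
  proof (induction rule: rtranclp_induct)
    case base then show ?case by simp
  next
    case (step r1 r2)
    have "adj (cart A R) (a, r1) (a, r2)" using adj_cart_snd[OF gA a, of R r1 r2] step(2) by simp
    then have "fst (f (a, r1)) = fst (f (a, r2))" by (rule pres1) simp
    then show ?case using step(3) by simp
  qed
  have C2: "snd (f (a, r)) = snd (f (a', r))" if r: "r \<in> verts R" and w: "(adj A)\<^sup>*\<^sup>* a a'" for a a' r
    using w
  proof (induction rule: rtranclp_induct)
    case base then show ?case by simp
  next
    case (step a1 a2)
    have "adj (cart A R) (a1, r) (a2, r)" using adj_cart_fst[OF gR r, of A a1 a2] step(2) by simp
    then have "snd (f (a1, r)) = snd (f (a2, r))" by (rule pres2) simp
    then show ?case using step(3) by simp
  qed
  define \<alpha> where "\<alpha> a = fst (f (a, r0))" for a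
  define \<beta> where "\<beta> r = snd (f (a0, r))" for r
  have dec: "f (a, r) = (\<alpha> a, \<beta> r)" if "a \<in> verts A" "r \<in> verts R" for a r
  proof -
    have "fst (f (a, r)) = \<alpha> a" unfolding \<alpha>_def using C1[OF that(1) cR[OF r0 that(2)]] by simp
    moreover have "snd (f (a, r)) = \<beta> r" unfolding \<beta>_def using C2[OF that(2) cA[OF a0 that(1)]] by simp
    ultimately show ?thesis by (simp add: prod_eq_iff)
  qed
  have fin: "f (a, r) \<in> verts A \<times> verts R" if "a \<in> verts A" "r \<in> verts R" for a r
    using aut_in[OF aut] that unfolding verts_cart by blast
  have inA: "\<alpha> a \<in> verts A" if "a \<in> verts A" for a using fin[OF that r0] dec[OF that r0] by simp
  have inR: "\<beta> r \<in> verts R" if "r \<in> verts R" for r using fin[OF a0 that] dec[OF a0 that] by simp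
  have injf: "inj_on f (verts A \<times> verts R)" using aut unfolding automorphism_def bij_betw_def verts_cart by blast
  have "inj_on \<alpha> (verts A)"
  proof (rule inj_onI)
    fix a a' assume h: "a \<in> verts A" "a' \<in> verts A" "\<alpha> a = \<alpha> a'"
    then have "f (a, r0) = f (a', r0)" using dec r0 by simp
    then show "a = a'" using injf h r0 unfolding inj_on_def by blast
  qed
  then have bA: "bij_betw \<alpha> (verts A) (verts A)" using inj_self_bij graphD(1)[OF gA] inA by blast
  have "inj_on \<beta> (verts R)"
  proof (rule inj_onI)
    fix r r' assume h: "r \<in> verts R" "r' \<in> verts R" "\<beta> r = \<beta> r'"
    then have "f (a0, r) = f (a0, r')" using dec a0 by simp
    then show "r = r'" using injf h a0 unfolding inj_on_def by blast
  qed
  then have bR: "bij_betw \<beta> (verts R) (verts R)" using inj_self_bij graphD(1)[OF gR] inR by blast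
  have adjf: "adj (cart A R) u v \<longleftrightarrow> adj (cart A R) (f u) (f v)" if "u \<in> verts A \<times> verts R" "v \<in> verts A \<times> verts R" for u v
    using aut that unfolding automorphism_def verts_cart by blast
  have "automorphism A \<alpha>"
    unfolding automorphism_def
  proof (intro conjI ballI)
    show "bij_betw \<alpha> (verts A) (verts A)" using bA .
    fix a a' assume h: "a \<in> verts A" "a' \<in> verts A"
    have "adj A a a' \<longleftrightarrow> adj (cart A R) (a, r0) (a', r0)" using adj_cart_fst[OF gR r0, of A a a'] by simp
    also have "\<dots> \<longleftrightarrow> adj (cart A R) (f (a, r0)) (f (a', r0))" using adjf h r0 by simp
    also have "\<dots> \<longleftrightarrow> adj (cart A R) (\<alpha> a, \<beta> r0) (\<alpha> a', \<beta> r0)" using dec h r0 by simp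
    also have "\<dots> \<longleftrightarrow> adj A (\<alpha> a) (\<alpha> a')" using adj_cart_fst[OF gR inR[OF r0], of A "\<alpha> a" "\<alpha> a'"] by simp
    finally show "adj A a a' \<longleftrightarrow> adj A (\<alpha> a) (\<alpha> a')" .
  qed
  moreover have "automorphism R \<beta>"
    unfolding automorphism_def
  proof (intro conjI ballI)
    show "bij_betw \<beta> (verts R) (verts R)" using bR .
    fix r r' assume h: "r \<in> verts R" "r' \<in> verts R"
    have "adj R r r' \<longleftrightarrow> adj (cart A R) (a0, r) (a0, r')" using adj_cart_snd[OF gA a0, of R r r'] by simp
    also have "\<dots> \<longleftrightarrow> adj (cart A R) (f (a0, r)) (f (a0, r'))" using adjf h a0 by simp
    also have "\<dots> \<longleftrightarrow> adj (cart A R) (\<alpha> a0, \<beta> r) (\<alpha> a0, \<beta> r')" using dec h a0 by simp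
    also have "\<dots> \<longleftrightarrow> adj R (\<beta> r) (\<beta> r')" using adj_cart_snd[OF gA inA[OF a0], of R "\<beta> r" "\<beta> r'"] by simp
    finally show "adj R r r' \<longleftrightarrow> adj R (\<beta> r) (\<beta> r')" .
  qed
  moreover have "\<forall>a\<in>verts A. \<forall>r\<in>verts R. f (a, r) = (\<alpha> a, \<beta> r)" using dec by blast
  ultimately show ?thesis by (intro exI[where x="\<alpha>"] exI[where x="\<beta>"]) simp
qed

lemma bij_funpow:
  assumes "bij_betw g S S"
  shows "bij_betw (g ^^ n) S S"
proof (induction n)
  case 0 then show ?case by (simp add: bij_betw_id[unfolded id_def])
next
  case (Suc n)
  have "bij_betw (g \<circ> (g ^^ n)) S S" using bij_betw_trans[OF Suc.IH assms] .
  then show ?case unfolding funpow.simps(2) .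
qed

lemma periodic:
  assumes fin: "finite S" and b: "bij_betw g S S"
  shows "\<exists>N>0. \<forall>x\<in>S. (g ^^ N) x = x"
proof -
  obtain xs where xs: "set xs = S" using finite_list[OF fin] by blast
  let ?h = "\<lambda>n. map (g ^^ n) xs"
  have m: "(g ^^ n) x \<in> S" if "x \<in> S" for n x using bij_betwE[OF bij_funpow[OF b]] that by blast
  have "range ?h \<subseteq> {ys. set ys \<subseteq> S \<and> length ys = length xs}"
  proof
    fix ys assume "ys \<in> range ?h"
    then obtain n where n: "ys = ?h n" by blast
    have "set ys \<subseteq> S" unfolding n set_map using m xs by blast
    then show "ys \<in> {ys. set ys \<subseteq> S \<and> length ys = length xs}" using n by simp
  qed
  then have fr: "finite (range ?h)" using finite_lists_length_eq[OF fin] finite_subset by blast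
  have "\<not> inj ?h"
  proof
    assume "inj ?h"
    then have "finite (UNIV :: nat set)" by (rule finite_imageD[OF fr])
    then show False by simp
  qed
  then obtain i j where ij: "?h i = ?h j" "i \<noteq> j" unfolding inj_on_def by blast
  obtain i j where ij: "?h i = ?h j" "i < j"
  proof (cases "i < j")
    case True then show ?thesis using that ij by blast
  next
    case False then show ?thesis using that[of j i] ij by simp
  qed
  have eq0: "\<forall>x\<in>set xs. (g ^^ i) x = (g ^^ j) x" using ij(1) by simp
  have eq: "(g ^^ i) x = (g ^^ j) x" if "x \<in> S" for x using eq0 that xs by blast
  have inj: "inj_on (g ^^ i) S" using bij_betw_imp_inj_on[OF bij_funpow[OF b]] .
  have "\<forall>x\<in>S. (g ^^ (j - i)) x = x"
  proof
    fix x assume x: "x \<in> S"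
    have "(g ^^ j) x = (g ^^ (i + (j - i))) x" using ij(2) by simp
    also have "\<dots> = (g ^^ i) ((g ^^ (j - i)) x)" by (simp only: funpow_add comp_apply)
    finally have "(g ^^ i) ((g ^^ (j - i)) x) = (g ^^ i) x" using eq[OF x] by simp
    then show "(g ^^ (j - i)) x = x" using inj m[OF x] x unfolding inj_on_def by blast
  qed
  then show ?thesis using ij(2) by (intro exI[of _ "j - i"]) simp
qed

lemma funpow_in:
  assumes "automorphism A g" "a \<in> verts A"
  shows "(g ^^ n) a \<in> verts A"
proof -
  have "bij_betw (g ^^ n) (verts A) (verts A)" using bij_funpow assms(1) unfolding automorphism_def by blast
  then show ?thesis using assms(2) bij_betwE by blast
qed

lemma iter_inv:
  assumes aA: "automorphism A \<alpha>" and aR: "automorphism R \<beta>"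
    and inv: "\<And>a r. a \<in> verts A \<Longrightarrow> r \<in> verts R \<Longrightarrow> c (\<alpha> a, \<beta> r) = c (a, r)"
    and a: "a \<in> verts A" and r: "r \<in> verts R"
  shows "c ((\<alpha> ^^ n) a, (\<beta> ^^ n) r) = c (a, r)"
proof (induction n)
  case 0 then show ?case by simp
next
  case (Suc n)
  have "c ((\<alpha> ^^ Suc n) a, (\<beta> ^^ Suc n) r) = c (\<alpha> ((\<alpha> ^^ n) a), \<beta> ((\<beta> ^^ n) r))" by simp
  also have "\<dots> = c ((\<alpha> ^^ n) a, (\<beta> ^^ n) r)" by (rule inv[OF funpow_in[OF aA a] funpow_in[OF aR r]])
  finally show ?case using Suc.IH by simp
qed

lemma orbit_bound:
  fixes A :: "'b graph" and R :: "'c graph" and c :: "'b \<times> 'c \<Rightarrow> nat"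
  assumes gA: "graph A" and gR: "graph R"
    and aA: "automorphism A \<alpha>" and aR: "automorphism R \<beta>"
    and a1: "a1 \<in> verts A" "\<alpha> a1 \<noteq> a1"
    and inv: "\<And>a r. a \<in> verts A \<Longrightarrow> r \<in> verts R \<Longrightarrow> c (\<alpha> a, \<beta> r) = c (a, r)"
  shows "card (c ` (verts A \<times> verts R)) \<le> (dist_threshold A - 1) * card (verts R)"
proof -
  have finA: "finite (verts A)" and finR: "finite (verts R)" using graphD(1) gA gR by blast+
  have bA: "bij_betw \<alpha> (verts A) (verts A)" using aA unfolding automorphism_def by blast
  have bR: "bij_betw \<beta> (verts R) (verts R)" using aR unfolding automorphism_def by blast
  obtain N where N: "N > 0" "\<forall>x\<in>verts A. (\<alpha> ^^ N) x = x" using periodic[OF finA bA] by blast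
  define orb where "orb a = range (\<lambda>n. (\<alpha> ^^ n) a)" for a
  have self: "a \<in> orb a" for a unfolding orb_def by (rule range_eqI[where x=0]) simp
  have O1: "orb (\<alpha> a) = orb a" if a: "a \<in> verts A" for a
  proof
    show "orb (\<alpha> a) \<subseteq> orb a"
    proof
      fix z assume "z \<in> orb (\<alpha> a)"
      then obtain n where "z = (\<alpha> ^^ n) (\<alpha> a)" unfolding orb_def by blast
      then have "z = (\<alpha> ^^ Suc n) a" by (simp only: funpow_Suc_right comp_apply)
      then show "z \<in> orb a" unfolding orb_def by blast
    qed
    show "orb a \<subseteq> orb (\<alpha> a)"
    proof
      fix z assume "z \<in> orb a"
      then obtain n where n: "z = (\<alpha> ^^ n) a" unfolding orb_def by blast
      have "(\<alpha> ^^ (n + N - 1)) (\<alpha> a) = (\<alpha> ^^ Suc (n + N - 1)) a" by (simp only: funpow_Suc_right comp_apply)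
      also have "Suc (n + N - 1) = n + N" using N(1) by simp
      also have "(\<alpha> ^^ (n + N)) a = (\<alpha> ^^ n) ((\<alpha> ^^ N) a)" by (simp only: funpow_add comp_apply)
      also have "\<dots> = z" using N(2) a n by simp
      finally show "z \<in> orb (\<alpha> a)" unfolding orb_def by (metis rangeI)
    qed
  qed
  let ?OS = "orb ` verts A"
  have finOS: "finite ?OS" using finA by blast
  obtain h :: "'b set \<Rightarrow> nat" and K where h: "h ` ?OS = {i. i < K}" "inj_on h ?OS"
    using finite_imp_inj_to_nat_seg[OF finOS] by blast
  define cA where "cA a = h (orb a)" for a
  have "\<not> distinguishing A cA"
  proof (rule nondistI[OF aA _ a1])
    fix w assume "w \<in> verts A"
    then show "cA (\<alpha> w) = cA w" unfolding cA_def using O1 by simp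
  qed
  then have t: "card (cA ` verts A) + 1 \<le> dist_threshold A" using theta_nondist[OF finA] by blast
  have "cA ` verts A = h ` ?OS" unfolding cA_def by (simp add: image_image)
  then have cOS: "card ?OS \<le> dist_threshold A - 1" using t card_image[OF h(2)] by simp
  define rep where "rep Oc = (SOME a. a \<in> verts A \<and> orb a = Oc)" for Oc
  let ?F = "\<lambda>p. c (rep (fst p), snd p)"
  have sub: "c ` (verts A \<times> verts R) \<subseteq> ?F ` (?OS \<times> verts R)"
  proof
    fix z assume "z \<in> c ` (verts A \<times> verts R)"
    then obtain a r where ar: "a \<in> verts A" "r \<in> verts R" "z = c (a, r)" by blast
    have "\<exists>a'. a' \<in> verts A \<and> orb a' = orb a" using ar(1) by blast
    then have a0: "rep (orb a) \<in> verts A" "orb (rep (orb a)) = orb a"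
      unfolding rep_def by (metis (mono_tags, lifting) someI_ex)+
    let ?a0 = "rep (orb a)"
    have "a \<in> orb ?a0" using a0(2) self by simp
    then obtain n where n: "a = (\<alpha> ^^ n) ?a0" unfolding orb_def by blast
    have "r \<in> (\<beta> ^^ n) ` verts R" using bij_funpow[OF bR, of n] ar(2) unfolding bij_betw_def by simp
    then obtain r' where r': "r' \<in> verts R" "r = (\<beta> ^^ n) r'" by blast
    have "z = c ((\<alpha> ^^ n) ?a0, (\<beta> ^^ n) r')" using ar(3) r'(2) n[symmetric] by simp
    also have "\<dots> = c (?a0, r')" by (rule iter_inv[OF aA aR inv a0(1) r'(1)])
    also have "\<dots> = ?F (orb a, r')" by simp
    finally have "z = ?F (orb a, r')" .
    moreover have "(orb a, r') \<in> ?OS \<times> verts R" using ar(1) r'(1) by blast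
    ultimately show "z \<in> ?F ` (?OS \<times> verts R)" by (intro image_eqI[where x="(orb a, r')"])
  qed
  have "card (c ` (verts A \<times> verts R)) \<le> card (?F ` (?OS \<times> verts R))"
    by (rule card_mono[OF _ sub]) (use finOS finR in blast)
  also have "\<dots> \<le> card (?OS \<times> verts R)" by (rule card_image_le) (use finOS finR in blast)
  also have "\<dots> = card ?OS * card (verts R)" by (rule card_cartesian_product)
  also have "\<dots> \<le> (dist_threshold A - 1) * card (verts R)" using cOS by simp
  finally show ?thesis .
qed

lemma enc_inj:
  assumes "v < (K::nat)" "v' < K" "u * K + v = u' * K + v'"
  shows "u = u' \<and> v = v'"
proof -
  have "(u * K + v) div K = u" "(u * K + v) mod K = v" using assms(1) by simp_all
  moreover have "(u' * K + v') div K = u'" "(u' * K + v') mod K = v'" using assms(2) by simp_all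
  ultimately show ?thesis using assms(3) by metis
qed

lemma lower_constr:
  fixes A :: "'b graph" and R :: "'c graph"
  assumes gA: "graph A" and gR: "graph R" and ne: "verts R \<noteq> {}" and t2: "dist_threshold A \<ge> 2"
  shows "\<exists>c. \<not> distinguishing (cart A R) c \<and> card (c ` verts (cart A R)) = (dist_threshold A - 1) * card (verts R)"
proof -
  have finA: "finite (verts A)" and finR: "finite (verts R)" using graphD(1) gA gR by blast+
  obtain cA where cA: "\<not> distinguishing A cA" "card (cA ` verts A) = dist_threshold A - 1"
    using theta_ge2[OF finA t2] by blast
  obtain \<alpha> a1 where al: "automorphism A \<alpha>" "\<And>w. w \<in> verts A \<Longrightarrow> cA (\<alpha> w) = cA w" "a1 \<in> verts A" "\<alpha> a1 \<noteq> a1"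
    using nondistD[OF cA(1)] by blast
  obtain h :: "'c \<Rightarrow> nat" and K where h: "h ` verts R = {i. i < K}" "inj_on h (verts R)"
    using finite_imp_inj_to_nat_seg[OF finR] by blast
  have cK: "card (verts R) = K" using card_image[OF h(2)] h(1) by simp
  obtain r1 where r1: "r1 \<in> verts R" using ne by blast
  define c where "c p = cA (fst p) * K + h (snd p)" for p
  define \<sigma> where "\<sigma> = map_prod \<alpha> (id :: 'c \<Rightarrow> 'c)"
  have bA: "bij_betw \<alpha> (verts A) (verts A)" using al(1) unfolding automorphism_def by blast
  have injA: "inj_on \<alpha> (verts A)" using bA unfolding bij_betw_def by blast
  have inA: "\<alpha> a \<in> verts A" if "a \<in> verts A" for a using aut_in[OF al(1) that] .
  have autA: "adj A a a' \<longleftrightarrow> adj A (\<alpha> a) (\<alpha> a')" if "a \<in> verts A" "a' \<in> verts A" for a a'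
    using al(1) that unfolding automorphism_def by blast
  have aut: "automorphism (cart A R) \<sigma>"
    unfolding automorphism_def
  proof (intro conjI ballI)
    show "bij_betw \<sigma> (verts (cart A R)) (verts (cart A R))"
      unfolding \<sigma>_def verts_cart by (rule bij_betw_map_prod[OF bA bij_betw_id])
    fix u v assume uv: "u \<in> verts (cart A R)" "v \<in> verts (cart A R)"
    obtain a r a' r' where p: "u = (a, r)" "v = (a', r')" by fastforce
    have m: "a \<in> verts A" "a' \<in> verts A" "r \<in> verts R" "r' \<in> verts R" using uv p unfolding verts_cart by auto
    have e: "\<alpha> a = \<alpha> a' \<longleftrightarrow> a = a'" using injA m unfolding inj_on_def by blast
    show "adj (cart A R) u v \<longleftrightarrow> adj (cart A R) (\<sigma> u) (\<sigma> v)"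
      unfolding p \<sigma>_def map_prod_simp id_apply adj_cart using e m inA autA by auto
  qed
  have nd: "\<not> distinguishing (cart A R) c"
  proof (rule nondistI[OF aut])
    fix w assume "w \<in> verts (cart A R)"
    then show "c (\<sigma> w) = c w" unfolding c_def \<sigma>_def verts_cart using al(2) by (cases w) auto
  next
    show "(a1, r1) \<in> verts (cart A R)" using al(3) r1 unfolding verts_cart by blast
    show "\<sigma> (a1, r1) \<noteq> (a1, r1)" unfolding \<sigma>_def using al(4) by simp
  qed
  define g where "g p = fst p * K + snd p" for p :: "nat \<times> nat"
  have "c ` verts (cart A R) = g ` (map_prod cA h ` (verts A \<times> verts R))"
    unfolding verts_cart image_image c_def g_def by simp
  also have "map_prod cA h ` (verts A \<times> verts R) = cA ` verts A \<times> {i. i < K}"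
    by (rule map_prod_surj_on[OF refl h(1)])
  finally have im: "c ` verts (cart A R) = g ` (cA ` verts A \<times> {i. i < K})" .
  have "inj_on g (cA ` verts A \<times> {i. i < K})"
  proof (rule inj_onI)
    fix p q assume pq: "p \<in> cA ` verts A \<times> {i. i < K}" "q \<in> cA ` verts A \<times> {i. i < K}" "g p = g q"
    have "snd p < K" "snd q < K" using pq by auto
    then have "fst p = fst q \<and> snd p = snd q" using enc_inj pq(3) unfolding g_def by blast
    then show "p = q" by (simp add: prod_eq_iff)
  qed
  then have "card (c ` verts (cart A R)) = card (cA ` verts A) * K"
    unfolding im by (simp add: card_image card_cartesian_product)
  then show ?thesis using nd cA(2) cK by auto
qed

lemma len_cp: "x \<in> verts (cartprod Xs) \<Longrightarrow> length x = length Xs"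
  unfolding verts_cp by simp

lemma verts_app:
  assumes "length p = length Xs"
  shows "p @ q \<in> verts (cartprod (Xs @ Ys)) \<longleftrightarrow> p \<in> verts (cartprod Xs) \<and> q \<in> verts (cartprod Ys)"
proof
  assume h: "p @ q \<in> verts (cartprod (Xs @ Ys))"
  then have l: "length q = length Ys" using assms unfolding verts_cp by simp
  have a: "\<forall>j<length Xs + length Ys. (p @ q)!j \<in> verts ((Xs @ Ys)!j)" using h unfolding verts_cp by simp
  have "\<forall>j<length Xs. p!j \<in> verts (Xs!j)"
  proof (intro allI impI)
    fix j assume j: "j < length Xs"
    then show "p!j \<in> verts (Xs!j)" using a[rule_format, of j] assms by (simp add: nth_append)
  qed
  moreover have "\<forall>j<length Ys. q!j \<in> verts (Ys!j)"
  proof (intro allI impI)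
    fix j assume j: "j < length Ys"
    then show "q!j \<in> verts (Ys!j)" using a[rule_format, of "length Xs + j"] assms by (simp add: nth_append)
  qed
  ultimately show "p \<in> verts (cartprod Xs) \<and> q \<in> verts (cartprod Ys)" using assms l unfolding verts_cp by simp
next
  assume h: "p \<in> verts (cartprod Xs) \<and> q \<in> verts (cartprod Ys)"
  then have l: "length q = length Ys" unfolding verts_cp by simp
  have "\<forall>j<length Xs + length Ys. (p @ q)!j \<in> verts ((Xs @ Ys)!j)"
  proof (intro allI impI)
    fix j assume j: "j < length Xs + length Ys"
    show "(p @ q)!j \<in> verts ((Xs @ Ys)!j)"
    proof (cases "j < length Xs")
      case True then show ?thesis using h assms unfolding verts_cp by (simp add: nth_append)
    next
      case False then show ?thesis using h assms j unfolding verts_cp by (simp add: nth_append)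
    qed
  qed
  then show "p @ q \<in> verts (cartprod (Xs @ Ys))" using assms l unfolding verts_cp by simp
qed

lemma adj_app:
  assumes lp: "length p = length Xs" and lp': "length p' = length Xs"
  shows "adj (cartprod (Xs @ Ys)) (p @ q) (p' @ q') \<longleftrightarrow>
    (p = p' \<and> p \<in> verts (cartprod Xs) \<and> adj (cartprod Ys) q q') \<or>
    (adj (cartprod Xs) p p' \<and> q = q' \<and> q \<in> verts (cartprod Ys))"
proof
  assume h: "adj (cartprod (Xs @ Ys)) (p @ q) (p' @ q')"
  then have m: "p @ q \<in> verts (cartprod (Xs @ Ys))" "p' @ q' \<in> verts (cartprod (Xs @ Ys))" unfolding adj_cp by blast+
  then have mm: "p \<in> verts (cartprod Xs)" "q \<in> verts (cartprod Ys)" "p' \<in> verts (cartprod Xs)" "q' \<in> verts (cartprod Ys)"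
    using verts_app lp lp' by blast+
  have lq: "length q = length Ys" "length q' = length Ys" using mm len_cp by blast+
  obtain j where j: "j < length Xs + length Ys" "adj ((Xs @ Ys)!j) ((p @ q)!j) ((p' @ q')!j)"
    "\<forall>l<length Xs + length Ys. l \<noteq> j \<longrightarrow> (p @ q)!l = (p' @ q')!l"
    using h unfolding adj_cp by auto
  show "(p = p' \<and> p \<in> verts (cartprod Xs) \<and> adj (cartprod Ys) q q') \<or>
    (adj (cartprod Xs) p p' \<and> q = q' \<and> q \<in> verts (cartprod Ys))"
  proof (cases "j < length Xs")
    case True
    have qq: "q = q'"
    proof (rule nth_equalityI)
      show "length q = length q'" using lq by simp
      fix i assume "i < length q"
      then show "q!i = q'!i" using j(3)[rule_format, of "length Xs + i"] lp lp' lq True by (simp add: nth_append)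
    qed
    have "adj (Xs!j) (p!j) (p'!j)" using j(2) True lp lp' by (simp add: nth_append)
    moreover have "\<forall>l<length Xs. l \<noteq> j \<longrightarrow> p!l = p'!l"
    proof (intro allI impI)
      fix l assume "l < length Xs" "l \<noteq> j"
      then show "p!l = p'!l" using j(3)[rule_format, of l] lp lp' by (simp add: nth_append)
    qed
    ultimately have "adj (cartprod Xs) p p'" unfolding adj_cp using mm True by blast
    then show ?thesis using qq mm by blast
  next
    case False
    define j' where "j' = j - length Xs"
    have jj: "j = length Xs + j'" "j' < length Ys" using False j(1) unfolding j'_def by auto
    have pp: "p = p'"
    proof (rule nth_equalityI)
      show "length p = length p'" using lp lp' by simp
      fix i assume "i < length p"
      then show "p!i = p'!i" using j(3)[rule_format, of i] lp lp' jj by (simp add: nth_append)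
    qed
    have "adj (Ys!j') (q!j') (q'!j')" using j(2) jj lp lp' by (simp add: nth_append)
    moreover have "\<forall>l<length Ys. l \<noteq> j' \<longrightarrow> q!l = q'!l"
    proof (intro allI impI)
      fix l assume "l < length Ys" "l \<noteq> j'"
      then show "q!l = q'!l" using j(3)[rule_format, of "length Xs + l"] lp lp' jj by (simp add: nth_append)
    qed
    ultimately have "adj (cartprod Ys) q q'" unfolding adj_cp using mm jj by blast
    then show ?thesis using pp mm by blast
  qed
next
  assume h: "(p = p' \<and> p \<in> verts (cartprod Xs) \<and> adj (cartprod Ys) q q') \<or>
    (adj (cartprod Xs) p p' \<and> q = q' \<and> q \<in> verts (cartprod Ys))"
  then show "adj (cartprod (Xs @ Ys)) (p @ q) (p' @ q')"
  proof
    assume a: "p = p' \<and> p \<in> verts (cartprod Xs) \<and> adj (cartprod Ys) q q'"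
    then have mq: "q \<in> verts (cartprod Ys)" "q' \<in> verts (cartprod Ys)" unfolding adj_cp by blast+
    have lq: "length q = length Ys" "length q' = length Ys" using mq len_cp by blast+
    obtain j where j: "j < length Ys" "adj (Ys!j) (q!j) (q'!j)" "\<forall>l<length Ys. l \<noteq> j \<longrightarrow> q!l = q'!l"
      using a unfolding adj_cp by blast
    have m: "p @ q \<in> verts (cartprod (Xs @ Ys))" "p' @ q' \<in> verts (cartprod (Xs @ Ys))"
      using verts_app lp lp' a mq by blast+
    have "adj ((Xs @ Ys)!(length Xs + j)) ((p @ q)!(length Xs + j)) ((p' @ q')!(length Xs + j))"
      using j(2) lp lp' by (simp add: nth_append)
    moreover have "\<forall>l<length (Xs @ Ys). l \<noteq> length Xs + j \<longrightarrow> (p @ q)!l = (p' @ q')!l"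
    proof (intro allI impI)
      fix l assume l: "l < length (Xs @ Ys)" "l \<noteq> length Xs + j"
      show "(p @ q)!l = (p' @ q')!l"
      proof (cases "l < length Xs")
        case True then show ?thesis using a lp lp' by (simp add: nth_append)
      next
        case False
        then have "l - length Xs < length Ys" "l - length Xs \<noteq> j" using l by auto
        then show ?thesis using False j(3) a lp lp' by (simp add: nth_append)
      qed
    qed
    moreover have "length Xs + j < length (Xs @ Ys)" using j(1) by simp
    ultimately show ?thesis unfolding adj_cp using m by blast
  next
    assume a: "adj (cartprod Xs) p p' \<and> q = q' \<and> q \<in> verts (cartprod Ys)"
    then have mp: "p \<in> verts (cartprod Xs)" "p' \<in> verts (cartprod Xs)" unfolding adj_cp by blast+
    obtain j where j: "j < length Xs" "adj (Xs!j) (p!j) (p'!j)" "\<forall>l<length Xs. l \<noteq> j \<longrightarrow> p!l = p'!l"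
      using a unfolding adj_cp by blast
    have m: "p @ q \<in> verts (cartprod (Xs @ Ys))" "p' @ q' \<in> verts (cartprod (Xs @ Ys))"
      using verts_app lp lp' a mp by blast+
    have "adj ((Xs @ Ys)!j) ((p @ q)!j) ((p' @ q')!j)"
      using j(1,2) lp lp' by (simp add: nth_append)
    moreover have "\<forall>l<length (Xs @ Ys). l \<noteq> j \<longrightarrow> (p @ q)!l = (p' @ q')!l"
    proof (intro allI impI)
      fix l assume l: "l < length (Xs @ Ys)" "l \<noteq> j"
      show "(p @ q)!l = (p' @ q')!l"
      proof (cases "l < length Xs")
        case True then show ?thesis using a j(3) l lp lp' by (simp add: nth_append)
      next
        case False then show ?thesis using a lp lp' by (simp add: nth_append)
      qed
    qed
    moreover have "j < length (Xs @ Ys)" using j(1) by simp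
    ultimately show ?thesis unfolding adj_cp using m by blast
  qed
qed

definition sphi :: "nat \<Rightarrow> nat \<Rightarrow> 'a list \<Rightarrow> 'a list \<times> 'a list" where
  "sphi off tb z = (take tb (drop off z), take off z @ drop (off + tb) z)"

definition spsi :: "nat \<Rightarrow> 'a list \<times> 'a list \<Rightarrow> 'a list" where
  "spsi off y = take off (snd y) @ fst y @ drop off (snd y)"

lemma sphi_app: "length p = off \<Longrightarrow> length b = tb \<Longrightarrow> sphi off tb (p @ b @ q) = (b, p @ q)"
  unfolding sphi_def by simp

lemma spsi_app: "length p = off \<Longrightarrow> spsi off (b, p @ q) = p @ b @ q"
  unfolding spsi_def by simp

lemma dec2:
  assumes "z \<in> verts (cartprod (Xs @ Ys))"
  shows "z = take (length Xs) z @ drop (length Xs) z" "take (length Xs) z \<in> verts (cartprod Xs)"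
    "drop (length Xs) z \<in> verts (cartprod Ys)" "length (take (length Xs) z) = length Xs"
proof -
  have l: "length z = length Xs + length Ys" using len_cp[OF assms] by simp
  show "z = take (length Xs) z @ drop (length Xs) z" by simp
  show lt: "length (take (length Xs) z) = length Xs" using l by simp
  have "take (length Xs) z @ drop (length Xs) z \<in> verts (cartprod (Xs @ Ys))" using assms by simp
  then show "take (length Xs) z \<in> verts (cartprod Xs)" "drop (length Xs) z \<in> verts (cartprod Ys)"
    using verts_app[OF lt] by blast+
qed

lemma dec3:
  assumes "z \<in> verts (cartprod (P @ B @ Q))"
  obtains p b q where "z = p @ b @ q" "length p = length P" "length b = length B"
    "p \<in> verts (cartprod P)" "b \<in> verts (cartprod B)" "q \<in> verts (cartprod Q)"
proof -
  let ?p = "take (length P) z" and ?r = "drop (length P) z"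
  have d1: "z = ?p @ ?r" "?p \<in> verts (cartprod P)" "?r \<in> verts (cartprod (B @ Q))" "length ?p = length P"
    using dec2[OF assms] by blast+
  let ?b = "take (length B) ?r" and ?q = "drop (length B) ?r"
  have d2: "?r = ?b @ ?q" "?b \<in> verts (cartprod B)" "?q \<in> verts (cartprod Q)" "length ?b = length B"
    using dec2[OF d1(3)] by blast+
  show ?thesis using that[of ?p ?b ?q] d1 d2 by simp
qed

lemma mem3:
  assumes "length p = length P" "length b = length B"
  shows "p @ b @ q \<in> verts (cartprod (P @ B @ Q)) \<longleftrightarrow>
     p \<in> verts (cartprod P) \<and> b \<in> verts (cartprod B) \<and> q \<in> verts (cartprod Q)"
  using verts_app[OF assms(1), of "b @ q" "B @ Q"] verts_app[OF assms(2), of q Q] by simp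

lemma adj3:
  assumes lp: "length p = length P" "length p' = length P" and lb: "length b = length B" "length b' = length B"
  shows "adj (cartprod (P @ B @ Q)) (p @ b @ q) (p' @ b' @ q') \<longleftrightarrow>
     adj (cart (cartprod B) (cartprod (P @ Q))) (b, p @ q) (b', p' @ q')"
proof -
  have e1: "b @ q = b' @ q' \<longleftrightarrow> b = b' \<and> q = q'" using lb by simp
  have e2: "p @ q = p' @ q' \<longleftrightarrow> p = p' \<and> q = q'" using lp by simp
  have m1: "b @ q \<in> verts (cartprod (B @ Q)) \<longleftrightarrow> b \<in> verts (cartprod B) \<and> q \<in> verts (cartprod Q)"
    using verts_app[OF lb(1)] .
  have m2: "p @ q \<in> verts (cartprod (P @ Q)) \<longleftrightarrow> p \<in> verts (cartprod P) \<and> q \<in> verts (cartprod Q)"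
    using verts_app[OF lp(1)] .
  show ?thesis
    unfolding adj_cart adj_app[OF lp, of "B @ Q"] adj_app[OF lb, of Q] adj_app[OF lp, of Q] e1 e2 m1 m2
    by blast
qed

lemma split_iso:
  fixes P B Q :: "'a graph list"
  defines "off \<equiv> length P" and "tb \<equiv> length B"
  defines "G \<equiv> cartprod (P @ B @ Q)" and "C \<equiv> cart (cartprod B) (cartprod (P @ Q))"
  shows "\<And>z. z \<in> verts G \<Longrightarrow> sphi off tb z \<in> verts C"
    "\<And>y. y \<in> verts C \<Longrightarrow> spsi off y \<in> verts G"
    "\<And>z. z \<in> verts G \<Longrightarrow> spsi off (sphi off tb z) = z"
    "\<And>y. y \<in> verts C \<Longrightarrow> sphi off tb (spsi off y) = y"
    "\<And>z z'. z \<in> verts G \<Longrightarrow> z' \<in> verts G \<Longrightarrow> adj G z z' \<longleftrightarrow> adj C (sphi off tb z) (sphi off tb z')"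
proof -
  fix z assume z: "z \<in> verts G"
  obtain p b q where d: "z = p @ b @ q" "length p = length P" "length b = length B"
    "p \<in> verts (cartprod P)" "b \<in> verts (cartprod B)" "q \<in> verts (cartprod Q)"
    using dec3[OF z[unfolded G_def]] by blast
  have "sphi off tb z = (b, p @ q)" using d sphi_app unfolding off_def tb_def by blast
  moreover have "p @ q \<in> verts (cartprod (P @ Q))" using verts_app d(2,4,6) by blast
  ultimately show "sphi off tb z \<in> verts C" unfolding C_def verts_cart using d(5) by simp
  show "spsi off (sphi off tb z) = z" using \<open>sphi off tb z = (b, p @ q)\<close> d spsi_app unfolding off_def by simp
next
  fix y assume y: "y \<in> verts C"
  obtain b r where br: "y = (b, r)" "b \<in> verts (cartprod B)" "r \<in> verts (cartprod (P @ Q))"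
    using y unfolding C_def verts_cart by blast
  let ?p = "take (length P) r" and ?q = "drop (length P) r"
  have d: "r = ?p @ ?q" "?p \<in> verts (cartprod P)" "?q \<in> verts (cartprod Q)" "length ?p = length P"
    using dec2[OF br(3)] by blast+
  have lb: "length b = length B" using len_cp[OF br(2)] .
  have s: "spsi off y = ?p @ b @ ?q" unfolding br(1) off_def spsi_def by simp
  show "spsi off y \<in> verts G" unfolding s G_def using mem3[OF d(4) lb] d br(2) by blast
  have "sphi off tb (spsi off y) = sphi off tb (?p @ b @ ?q)" using s by simp
  also have "\<dots> = (b, ?p @ ?q)" using sphi_app[OF d(4) lb] unfolding off_def tb_def by blast
  also have "\<dots> = y" using d(1) br(1) by simp
  finally show "sphi off tb (spsi off y) = y" .
next
  fix z z' assume z: "z \<in> verts G" and z': "z' \<in> verts G"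
  obtain p b q where d: "z = p @ b @ q" "length p = length P" "length b = length B"
    using dec3[OF z[unfolded G_def]] by blast
  obtain p' b' q' where d': "z' = p' @ b' @ q'" "length p' = length P" "length b' = length B"
    using dec3[OF z'[unfolded G_def]] by blast
  have "sphi off tb z = (b, p @ q)" "sphi off tb z' = (b', p' @ q')"
    using d d' sphi_app unfolding off_def tb_def by blast+
  then show "adj G z z' \<longleftrightarrow> adj C (sphi off tb z) (sphi off tb z')"
    unfolding G_def C_def d(1) d'(1) using adj3[OF d(2) d'(2) d(3) d'(3)] by simp
qed

lemma sphi_snd_eq:
  assumes "length x = n" "length y = n" "off + tb \<le> n"
  shows "snd (sphi off tb x) = snd (sphi off tb y) \<longleftrightarrow> (\<forall>i<n. (i < off \<or> off + tb \<le> i) \<longrightarrow> x!i = y!i)"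
proof -
  have L: "(take off z @ drop (off + tb) z)!i = (if i < off then z!i else z!(i + tb))"
    if "length z = n" "i < n - tb" for z i
  proof (cases "i < off")
    case True then show ?thesis using that assms(3) by (simp add: nth_append)
  next
    case False
    then have "(take off z @ drop (off + tb) z)!i = drop (off + tb) z ! (i - off)"
      using that assms(3) by (simp add: nth_append)
    also have "\<dots> = z!(off + tb + (i - off))" using that assms(3) False by simp
    also have "off + tb + (i - off) = i + tb" using False by simp
    finally show ?thesis using False by simp
  qed
  have len: "length (take off z @ drop (off + tb) z) = n - tb" if "length z = n" for z
    using that assms(3) by simp
  show ?thesis unfolding sphi_def snd_conv
  proof
    assume e: "take off x @ drop (off + tb) x = take off y @ drop (off + tb) y"
    show "\<forall>i<n. (i < off \<or> off + tb \<le> i) \<longrightarrow> x!i = y!i"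
    proof (intro allI impI)
      fix i assume i: "i < n" "i < off \<or> off + tb \<le> i"
      show "x!i = y!i"
      proof (cases "i < off")
        case True
        then have "i < n - tb" using assms(3) by simp
        then show ?thesis using e L[OF assms(1)] L[OF assms(2)] True by metis
      next
        case False
        then have "i - tb < n - tb" "\<not> i - tb < off" "i - tb + tb = i" using i assms(3) by auto
        then show ?thesis using e L[OF assms(1)] L[OF assms(2)] by metis
      qed
    qed
  next
    assume h: "\<forall>i<n. (i < off \<or> off + tb \<le> i) \<longrightarrow> x!i = y!i"
    show "take off x @ drop (off + tb) x = take off y @ drop (off + tb) y"
    proof (rule nth_equalityI)
      show "length (take off x @ drop (off + tb) x) = length (take off y @ drop (off + tb) y)"
        using len assms by simp
      fix i assume "i < length (take off x @ drop (off + tb) x)"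
      then have i: "i < n - tb" using len assms by simp
      show "(take off x @ drop (off + tb) x)!i = (take off y @ drop (off + tb) y)!i"
        unfolding L[OF assms(1) i] L[OF assms(2) i] using h i assms(3) by auto
    qed
  qed
qed

lemma sphi_fst_eq:
  assumes "length x = n" "length y = n" "off + tb \<le> n"
  shows "fst (sphi off tb x) = fst (sphi off tb y) \<longleftrightarrow> (\<forall>i<n. (off \<le> i \<and> i < off + tb) \<longrightarrow> x!i = y!i)"
proof -
  have L: "(take tb (drop off z))!i = z!(off + i)" if "length z = n" "i < tb" for z i
    using that assms(3) by simp
  have len: "length (take tb (drop off z)) = tb" if "length z = n" for z
    using that assms(3) by simp
  show ?thesis unfolding sphi_def fst_conv
  proof
    assume e: "take tb (drop off x) = take tb (drop off y)"
    show "\<forall>i<n. (off \<le> i \<and> i < off + tb) \<longrightarrow> x!i = y!i"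
    proof (intro allI impI)
      fix i assume i: "i < n" "off \<le> i \<and> i < off + tb"
      then have "i - off < tb" "off + (i - off) = i" by auto
      then show "x!i = y!i" using e L[OF assms(1)] L[OF assms(2)] by metis
    qed
  next
    assume h: "\<forall>i<n. (off \<le> i \<and> i < off + tb) \<longrightarrow> x!i = y!i"
    show "take tb (drop off x) = take tb (drop off y)"
    proof (rule nth_equalityI)
      show "length (take tb (drop off x)) = length (take tb (drop off y))" using len assms by simp
      fix i assume "i < length (take tb (drop off x))"
      then have i: "i < tb" using len assms by simp
      show "take tb (drop off x) ! i = take tb (drop off y) ! i"
        unfolding L[OF assms(1) i] L[OF assms(2) i] using h i assms(3) by auto
    qed
  qed
qed

lemma block_pres:
  fixes P B Q :: "'a graph list"
  defines "Ts \<equiv> P @ B @ Q" and "off \<equiv> length P" and "tb \<equiv> length B"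
  assumes good: "good Ts" and pr: "allprime Ts" and aut: "automorphism (cartprod Ts) f"
    and C: "\<And>j l. j < length Ts \<Longrightarrow> l < length Ts \<Longrightarrow> iso (Ts!j) (Ts!l) \<Longrightarrow>
              (off \<le> j \<and> j < off + tb \<longleftrightarrow> off \<le> l \<and> l < off + tb)"
    and xv: "x \<in> verts (cartprod Ts)" and yv: "y \<in> verts (cartprod Ts)" and xy: "adj (cartprod Ts) x y"
  shows "snd (sphi off tb x) = snd (sphi off tb y) \<Longrightarrow> snd (sphi off tb (f x)) = snd (sphi off tb (f y))"
    and "fst (sphi off tb x) = fst (sphi off tb y) \<Longrightarrow> fst (sphi off tb (f x)) = fst (sphi off tb (f y))"
proof -
  let ?n = "length Ts"
  have ob: "off + tb \<le> ?n" unfolding Ts_def off_def tb_def by simp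
  have fxv: "f x \<in> verts (cartprod Ts)" "f y \<in> verts (cartprod Ts)" using aut_in[OF aut] xv yv by blast+
  have lens: "length x = ?n" "length y = ?n" "length (f x) = ?n" "length (f y) = ?n"
    using len_cp xv yv fxv by blast+
  obtain j where j: "j < ?n" "adj (Ts!j) (x!j) (y!j)" "\<forall>p<?n. p \<noteq> j \<longrightarrow> x!p = y!p"
    using xy unfolding adj_cp by blast
  have xj: "x!j \<noteq> y!j"
  proof
    assume "x!j = y!j"
    then show False using j(2) graphD(5)[OF goodD(1)[OF good j(1)]] by metis
  qed
  have fxy: "adj (cartprod Ts) (f x) (f y)" using aut xv yv xy unfolding automorphism_def by blast
  obtain l where l: "l < ?n" "\<forall>p<?n. p \<noteq> l \<longrightarrow> f x!p = f y!p"
    using fxy unfolding adj_cp by blast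
  have "iso (Ts!j) (Ts!l)" by (rule edge_iso[OF good pr aut xv yv j(1) xj j(3) l(1) l(2)])
  then have jl: "off \<le> j \<and> j < off + tb \<longleftrightarrow> off \<le> l \<and> l < off + tb" using C j(1) l(1) by blast
  show "snd (sphi off tb x) = snd (sphi off tb y) \<Longrightarrow> snd (sphi off tb (f x)) = snd (sphi off tb (f y))"
  proof -
    assume "snd (sphi off tb x) = snd (sphi off tb y)"
    then have h: "\<forall>i<?n. (i < off \<or> off + tb \<le> i) \<longrightarrow> x!i = y!i" using sphi_snd_eq[OF lens(1,2) ob] by blast
    then have "off \<le> j \<and> j < off + tb" using xj j(1) by (meson not_le)
    then have "off \<le> l \<and> l < off + tb" using jl by blast
    then have "\<forall>i<?n. (i < off \<or> off + tb \<le> i) \<longrightarrow> f x!i = f y!i" using l(2) by auto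
    then show ?thesis using sphi_snd_eq[OF lens(3,4) ob] by blast
  qed
  show "fst (sphi off tb x) = fst (sphi off tb y) \<Longrightarrow> fst (sphi off tb (f x)) = fst (sphi off tb (f y))"
  proof -
    assume "fst (sphi off tb x) = fst (sphi off tb y)"
    then have h: "\<forall>i<?n. (off \<le> i \<and> i < off + tb) \<longrightarrow> x!i = y!i" using sphi_fst_eq[OF lens(1,2) ob] by blast
    then have "\<not> (off \<le> j \<and> j < off + tb)" using xj j(1) by blast
    then have "\<not> (off \<le> l \<and> l < off + tb)" using jl by blast
    then have "\<forall>i<?n. (off \<le> i \<and> i < off + tb) \<longrightarrow> f x!i = f y!i" using l(2) by auto
    then show ?thesis using sphi_fst_eq[OF lens(3,4) ob] by blast
  qed
qed

lemma split_adj_rev: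
  fixes P B Q :: "'a graph list"
  defines "off \<equiv> length P" and "tb \<equiv> length B"
  defines "G \<equiv> cartprod (P @ B @ Q)" and "C \<equiv> cart (cartprod B) (cartprod (P @ Q))"
  shows "\<And>y y'. y \<in> verts C \<Longrightarrow> y' \<in> verts C \<Longrightarrow> adj C y y' \<longleftrightarrow> adj G (spsi off y) (spsi off y')"
proof -
  fix y y' assume y: "y \<in> verts C" "y' \<in> verts C"
  have "adj G (spsi off y) (spsi off y') \<longleftrightarrow> adj C (sphi off tb (spsi off y)) (sphi off tb (spsi off y'))"
    using split_iso(5)[where P=P and B=B and Q=Q] split_iso(2)[where P=P and B=B and Q=Q] y
    unfolding off_def tb_def G_def C_def by blast
  then show "adj C y y' \<longleftrightarrow> adj G (spsi off y) (spsi off y')"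
    using split_iso(4)[where P=P and B=B and Q=Q] y unfolding off_def tb_def C_def by simp
qed

lemma card_block:
  fixes P B Q :: "'a graph list"
  shows "card (verts (cartprod (P @ B @ Q))) = card (verts (cartprod B)) * card (verts (cartprod (P @ Q)))"
proof -
  let ?phi = "sphi (length P) (length B)" and ?psi = "spsi (length P)"
  let ?G = "cartprod (P @ B @ Q)" and ?C = "cart (cartprod B) (cartprod (P @ Q))"
  note s = split_iso[where P=P and B=B and Q=Q]
  have "bij_betw ?phi (verts ?G) (verts ?C)"
  proof (rule bij_betw_byWitness[where f'="?psi"])
    show "\<forall>a\<in>verts ?G. ?psi (?phi a) = a" using s(3) by blast
    show "\<forall>a'\<in>verts ?C. ?phi (?psi a') = a'" using s(4) by blast
    show "?phi ` verts ?G \<subseteq> verts ?C" using s(1) by blast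
    show "?psi ` verts ?C \<subseteq> verts ?G" using s(2) by blast
  qed
  then have "card (verts ?G) = card (verts ?C)" by (rule bij_betw_same_card)
  then show ?thesis unfolding verts_cart card_cartesian_product .
qed

lemma upper_block:
  fixes P B Q :: "'a graph list" and c :: "'a list \<Rightarrow> nat"
  defines "Ts \<equiv> P @ B @ Q" and "off \<equiv> length P" and "tb \<equiv> length B"
  assumes good: "good Ts" and pr: "allprime Ts" and gB: "good B" and gPQ: "good (P @ Q)"
    and C: "\<And>j l. j < length Ts \<Longrightarrow> l < length Ts \<Longrightarrow> iso (Ts!j) (Ts!l) \<Longrightarrow>
              (off \<le> j \<and> j < off + tb \<longleftrightarrow> off \<le> l \<and> l < off + tb)"
    and aut: "automorphism (cartprod Ts) f" and cinv: "\<And>w. w \<in> verts (cartprod Ts) \<Longrightarrow> c (f w) = c w"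
    and v: "v \<in> verts (cartprod Ts)" and fv: "fst (sphi off tb (f v)) \<noteq> fst (sphi off tb v)"
    and neB: "verts (cartprod B) \<noteq> {}" and neR: "verts (cartprod (P @ Q)) \<noteq> {}"
  shows "card (c ` verts (cartprod Ts)) \<le> (dist_threshold (cartprod B) - 1) * card (verts (cartprod (P @ Q)))"
proof -
  let ?A = "cartprod B" and ?R = "cartprod (P @ Q)"
  let ?G = "cartprod Ts" and ?C = "cart ?A ?R"
  let ?phi = "sphi off tb" and ?psi = "spsi off"
  have s1: "\<And>z. z \<in> verts ?G \<Longrightarrow> ?phi z \<in> verts ?C" using split_iso(1) unfolding Ts_def off_def tb_def by blast
  have s2: "\<And>y. y \<in> verts ?C \<Longrightarrow> ?psi y \<in> verts ?G" using split_iso(2) unfolding Ts_def off_def tb_def by blast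
  have s3: "\<And>z. z \<in> verts ?G \<Longrightarrow> ?psi (?phi z) = z" using split_iso(3) unfolding Ts_def off_def tb_def by blast
  have s4: "\<And>y. y \<in> verts ?C \<Longrightarrow> ?phi (?psi y) = y" using split_iso(4) unfolding Ts_def off_def tb_def by blast
  have s5: "\<And>z z'. z \<in> verts ?G \<Longrightarrow> z' \<in> verts ?G \<Longrightarrow> adj ?G z z' \<longleftrightarrow> adj ?C (?phi z) (?phi z')"
    using split_iso(5) unfolding Ts_def off_def tb_def by blast
  have s6: "\<And>y y'. y \<in> verts ?C \<Longrightarrow> y' \<in> verts ?C \<Longrightarrow> adj ?C y y' \<longleftrightarrow> adj ?G (?psi y) (?psi y')"
    using split_adj_rev unfolding Ts_def off_def tb_def by blast
  have gA: "graph ?A" using good_graph[OF gB] .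
  have gR: "graph ?R" using good_graph[OF gPQ] .
  have gC: "graph ?C" using graph_cart[OF gA gR] .
  define \<sigma> where "\<sigma> = ?phi \<circ> f \<circ> ?psi"
  have autC: "automorphism ?C \<sigma>" unfolding \<sigma>_def by (rule conj_aut[OF s1 s2 s3 s4 s5 aut])
  have pres1: "fst (\<sigma> u) = fst (\<sigma> w)" if uw: "adj ?C u w" "fst u = fst w" for u w
  proof -
    have uv: "u \<in> verts ?C" "w \<in> verts ?C" using graphD(2,3)[OF gC uw(1)] by blast+
    have a: "adj ?G (?psi u) (?psi w)" using s6 uv uw(1) by blast
    have "fst (?phi (?psi u)) = fst (?phi (?psi w))" using s4 uv uw(2) by simp
    then have "fst (?phi (f (?psi u))) = fst (?phi (f (?psi w)))"
      using block_pres(2)[OF good[unfolded Ts_def] pr[unfolded Ts_def] aut[unfolded Ts_def] C[unfolded Ts_def off_def tb_def]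
          s2[OF uv(1), unfolded Ts_def] s2[OF uv(2), unfolded Ts_def] a[unfolded Ts_def]]
      unfolding off_def tb_def Ts_def by blast
    then show ?thesis unfolding \<sigma>_def by simp
  qed
  have pres2: "snd (\<sigma> u) = snd (\<sigma> w)" if uw: "adj ?C u w" "snd u = snd w" for u w
  proof -
    have uv: "u \<in> verts ?C" "w \<in> verts ?C" using graphD(2,3)[OF gC uw(1)] by blast+
    have a: "adj ?G (?psi u) (?psi w)" using s6 uv uw(1) by blast
    have "snd (?phi (?psi u)) = snd (?phi (?psi w))" using s4 uv uw(2) by simp
    then have "snd (?phi (f (?psi u))) = snd (?phi (f (?psi w)))"
      using block_pres(1)[OF good[unfolded Ts_def] pr[unfolded Ts_def] aut[unfolded Ts_def] C[unfolded Ts_def off_def tb_def]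
          s2[OF uv(1), unfolded Ts_def] s2[OF uv(2), unfolded Ts_def] a[unfolded Ts_def]]
      unfolding off_def tb_def Ts_def by blast
    then show ?thesis unfolding \<sigma>_def by simp
  qed
  obtain a0 where a0: "a0 \<in> verts ?A" using neB by blast
  obtain r0 where r0: "r0 \<in> verts ?R" using neR by blast
  have cA: "\<And>a a'. a \<in> verts ?A \<Longrightarrow> a' \<in> verts ?A \<Longrightarrow> (adj ?A)\<^sup>*\<^sup>* a a'" using conn_cp[OF gB] by blast
  have cR: "\<And>r r'. r \<in> verts ?R \<Longrightarrow> r' \<in> verts ?R \<Longrightarrow> (adj ?R)\<^sup>*\<^sup>* r r'" using conn_cp[OF gPQ] by blast
  obtain \<alpha> \<beta> where ab: "automorphism ?A \<alpha>" "automorphism ?R \<beta>"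
    "\<forall>a\<in>verts ?A. \<forall>r\<in>verts ?R. \<sigma> (a, r) = (\<alpha> a, \<beta> r)"
    using prod_form[OF gA gR cA cR a0 r0 autC pres1 pres2] by blast
  obtain a r where ar: "?phi v = (a, r)" by fastforce
  have arv: "a \<in> verts ?A" "r \<in> verts ?R" using s1[OF v] ar unfolding verts_cart by auto
  have "\<sigma> (a, r) = ?phi (f v)" unfolding \<sigma>_def using ar[symmetric] s3[OF v] by simp
  then have "(\<alpha> a, \<beta> r) = ?phi (f v)" using ab(3) arv by simp
  then have "\<alpha> a = fst (?phi (f v))" by (metis fst_conv)
  then have a1: "\<alpha> a \<noteq> a" using fv ar by simp
  let ?c' = "c \<circ> ?psi"
  have inv: "?c' (\<alpha> a, \<beta> r) = ?c' (a, r)" if "a \<in> verts ?A" "r \<in> verts ?R" for a r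
  proof -
    have y: "(a, r) \<in> verts ?C" using that unfolding verts_cart by blast
    have "?c' (\<alpha> a, \<beta> r) = ?c' (\<sigma> (a, r))" using ab(3) that by simp
    also have "\<dots> = c (f (?psi (a, r)))" unfolding \<sigma>_def using s3[OF aut_in[OF aut s2[OF y]]] by simp
    also have "\<dots> = c (?psi (a, r))" using cinv[OF s2[OF y]] .
    finally show ?thesis by simp
  qed
  have ob: "card (?c' ` (verts ?A \<times> verts ?R)) \<le> (dist_threshold ?A - 1) * card (verts ?R)"
    by (rule orbit_bound[where c="?c'", OF gA gR ab(1,2) arv(1) a1 inv])
  have fvv: "f v \<noteq> v" using fv by metis
  have nd: "\<not> distinguishing ?G c" by (rule nondistI[where c=c, OF aut cinv v fvv])
  have "card (?c' ` verts ?C) = card (c ` verts ?G)" using transfer_nd(2)[OF s1 s2 s3 s4 s5 nd] .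
  then show ?thesis using ob unfolding verts_cart by simp
qed

lemma lower_block:
  fixes P B Q :: "'a graph list"
  assumes gB: "good B" and gPQ: "good (P @ Q)" and neR: "verts (cartprod (P @ Q)) \<noteq> {}"
    and t2: "dist_threshold (cartprod B) \<ge> 2"
  shows "\<exists>c. \<not> distinguishing (cartprod (P @ B @ Q)) c \<and>
     card (c ` verts (cartprod (P @ B @ Q))) = (dist_threshold (cartprod B) - 1) * card (verts (cartprod (P @ Q)))"
proof -
  let ?A = "cartprod B" and ?R = "cartprod (P @ Q)"
  let ?G = "cartprod (P @ B @ Q)" and ?C = "cart ?A ?R"
  let ?phi = "sphi (length P) (length B)" and ?psi = "spsi (length P)"
  note s = split_iso[where P=P and B=B and Q=Q]
  have gA: "graph ?A" using good_graph[OF gB] .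
  have gR: "graph ?R" using good_graph[OF gPQ] .
  obtain c where c: "\<not> distinguishing ?C c" "card (c ` verts ?C) = (dist_threshold ?A - 1) * card (verts ?R)"
    using lower_constr[OF gA gR neR t2] by blast
  have "\<not> distinguishing ?G (c \<circ> ?phi)" "card ((c \<circ> ?phi) ` verts ?G) = card (c ` verts ?C)"
    using transfer_nd[of ?C ?psi ?G ?phi, OF s(2) s(1) s(4) s(3) split_adj_rev c(1)] by blast+
  then show ?thesis using c(2) by metis
qed

lemma concat_split:
  assumes "i < k"
  shows "concat (map F [0..<k]) = concat (map F [0..<i]) @ F i @ concat (map F [Suc i..<k])"
proof -
  have "[0..<k] = [0..<i] @ [i..<k]" using upt_add_eq_append[of 0 i "k - i"] assms by simp
  moreover have "[i..<k] = i # [Suc i..<k]" using upt_conv_Cons[OF assms] .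
  ultimately show ?thesis by simp
qed

lemma block_exists:
  assumes "m < length (concat (map F [0..<k]))"
  shows "\<exists>i<k. length (concat (map F [0..<i])) \<le> m \<and> m < length (concat (map F [0..<i])) + length (F i)"
  using assms
proof (induction k)
  case 0 then show ?case by simp
next
  case (Suc k)
  show ?case
  proof (cases "m < length (concat (map F [0..<k]))")
    case True then show ?thesis using Suc.IH less_SucI by blast
  next
    case False
    then show ?thesis using Suc.prems by (intro exI[of _ k]) simp
  qed
qed

lemma cp_nonempty:
  assumes "\<forall>j<length Ts. verts (Ts!j) \<noteq> {}"
  shows "verts (cartprod Ts) \<noteq> {}"
proof -
  let ?x = "map (\<lambda>j. SOME v. v \<in> verts (Ts!j)) [0..<length Ts]"
  have "?x \<in> verts (cartprod Ts)" unfolding verts_cp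
  proof (intro CollectI conjI allI impI)
    fix j assume j: "j < length Ts"
    then have "\<exists>v. v \<in> verts (Ts!j)" using assms by blast
    then have "(SOME v. v \<in> verts (Ts!j)) \<in> verts (Ts!j)" by (rule someI_ex)
    then show "?x!j \<in> verts (Ts!j)" using j by simp
  qed simp
  then show ?thesis by blast
qed

lemma good_sub:
  assumes "\<forall>T\<in>set L. graph T \<and> (\<forall>a\<in>verts T. \<forall>b\<in>verts T. (adj T)\<^sup>*\<^sup>* a b)"
  shows "good L"
  unfolding good_def using assms nth_mem by blast


theorem theorem4p3:
  fixes Gs :: "nat \<Rightarrow> 'a graph" and t :: "nat \<Rightarrow> nat" and k :: nat
  assumes "k \<ge> 1"
    and "\<And>i. i < k \<Longrightarrow> graph (Gs i)"
    and "\<And>i. i < k \<Longrightarrow> connected_graph (Gs i)"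
    and "\<And>i. i < k \<Longrightarrow> prime_graph (Gs i)"
    and "\<And>i j. i < k \<Longrightarrow> j < k \<Longrightarrow> i \<noteq> j \<Longrightarrow> \<not> iso (Gs i) (Gs j)"
    and "\<And>i. i < k \<Longrightarrow> t i \<ge> 1"
    and "G = cartprod (concat (map (\<lambda>i. replicate (t i) (Gs i)) [0..<k]))"
    and "connected_graph G"
  shows "dist_threshold G =
     Max ((\<lambda>i. (dist_threshold (cpower (Gs i) (t i)) - 1)
               * (card (verts G) div card (verts (cpower (Gs i) (t i))))) ` {..<k}) + 1"
proof -
  note k1 = assms(1) and gG = assms(2) and cG = assms(3) and pG = assms(4) and niso = assms(5)
  define F where "F i = replicate (t i) (Gs i)" for i
  define Ts where "Ts = concat (map F [0..<k])"
  have GT: "G = cartprod Ts" using assms(7) unfolding Ts_def F_def by simp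
  define Pp where "Pp i = concat (map F [0..<i])" for i
  define Qq where "Qq i = concat (map F [Suc i..<k])" for i
  have spl: "Ts = Pp i @ F i @ Qq i" if "i < k" for i
    unfolding Ts_def Pp_def Qq_def using concat_split[OF that] .
  have lF: "length (F i) = t i" for i unfolding F_def by simp
  have cpF: "cpower (Gs i) (t i) = cartprod (F i)" for i unfolding cpower_def F_def ..
  have setTs: "\<exists>i<k. T = Gs i" if "T \<in> set Ts" for T
    using that unfolding Ts_def F_def by auto
  have propT: "graph T \<and> (\<forall>a\<in>verts T. \<forall>b\<in>verts T. (adj T)\<^sup>*\<^sup>* a b) \<and> verts T \<noteq> {} \<and> prime_graph T"
    if "T \<in> set Ts" for T
    using setTs[OF that] gG cG pG unfolding connected_graph_def by blast
  have goodL: "good L" if "set L \<subseteq> set Ts" for L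
    by (rule good_sub) (use that propT in blast)
  have neL: "verts (cartprod L) \<noteq> {}" if "set L \<subseteq> set Ts" for L
    by (rule cp_nonempty) (use that propT nth_mem in blast)
  have goodT: "good Ts" using goodL by blast
  have prT: "allprime Ts" unfolding allprime_def using propT nth_mem by blast
  have finV: "finite (verts G)" using graphD(1)[OF good_graph[OF goodT]] GT by simp
  have subs: "set (F i) \<subseteq> set Ts" "set (Pp i @ Qq i) \<subseteq> set Ts" if "i < k" for i
    using spl[OF that] by auto
  have blk: "\<exists>i<k. length (Pp i) \<le> m \<and> m < length (Pp i) + t i \<and> Ts!m = Gs i" if mT: "m < length Ts" for m
  proof -
    obtain i where i: "i < k" "length (Pp i) \<le> m" "m < length (Pp i) + length (F i)"
      using block_exists[of m F k, OF mT[unfolded Ts_def]] unfolding Pp_def by blast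
    have lt: "m - length (Pp i) < length (F i)" using i(2,3) by arith
    have "Ts!m = (Pp i @ F i @ Qq i)!m" using spl[OF i(1)] by simp
    also have "\<dots> = (F i @ Qq i) ! (m - length (Pp i))" using i(2) by (simp add: nth_append)
    also have "\<dots> = F i ! (m - length (Pp i))" using lt by (simp add: nth_append)
    finally have "Ts!m = F i ! (m - length (Pp i))" .
    also have "\<dots> = Gs i" using i(2,3) unfolding F_def by simp
    finally show ?thesis using i lF[of i] by (intro exI[of _ i]) simp
  qed
  have blk_uniq: "i = i'" if "i < k" "i' < k" "m < length Ts" "length (Pp i) \<le> m" "m < length (Pp i) + t i"
    "Ts!m = Gs i'" for i i' m
  proof -
    have lt: "m - length (Pp i) < length (F i)" using that(4,5) lF by simp
    have "Ts!m = (Pp i @ F i @ Qq i)!m" using spl[OF that(1)] by simp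
    also have "\<dots> = (F i @ Qq i) ! (m - length (Pp i))" using that(4) by (simp add: nth_append)
    also have "\<dots> = F i ! (m - length (Pp i))" using lt by (simp add: nth_append)
    finally have "Ts!m = F i ! (m - length (Pp i))" .
    also have "\<dots> = Gs i" using that(4,5) unfolding F_def by simp
    finally have "Gs i = Gs i'" using that(6) by simp
    then have "iso (Gs i) (Gs i')" using iso_refl by metis
    then show "i = i'" using niso that(1,2) by blast
  qed
  have Ccond: "(length (Pp i) \<le> j \<and> j < length (Pp i) + length (F i) \<longleftrightarrow> length (Pp i) \<le> l \<and> l < length (Pp i) + length (F i))"
    if i: "i < k" and j: "j < length Ts" and l: "l < length Ts" and isojl: "iso (Ts!j) (Ts!l)" for i j l
  proof -
    obtain ij where ij: "ij < k" "length (Pp ij) \<le> j" "j < length (Pp ij) + t ij" "Ts!j = Gs ij" using blk[OF j] by blast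
    obtain il where il: "il < k" "length (Pp il) \<le> l" "l < length (Pp il) + t il" "Ts!l = Gs il" using blk[OF l] by blast
    have "ij = il" using isojl ij(4) il(4) niso ij(1) il(1) by metis
    have "length (Pp i) \<le> j \<and> j < length (Pp i) + t i \<longleftrightarrow> i = ij"
      using blk_uniq[OF i ij(1) j _ _ ij(4)] ij by blast
    moreover have "length (Pp i) \<le> l \<and> l < length (Pp i) + t i \<longleftrightarrow> i = il"
      using blk_uniq[OF i il(1) l _ _ il(4)] il by blast
    ultimately show ?thesis using \<open>ij = il\<close> lF by simp
  qed
  define val where "val i = (dist_threshold (cpower (Gs i) (t i)) - 1)
               * (card (verts G) div card (verts (cpower (Gs i) (t i))))" for i
  have val_eq: "val i = (dist_threshold (cartprod (F i)) - 1) * card (verts (cartprod (Pp i @ Qq i)))"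
    if i: "i < k" for i
  proof -
    have c: "card (verts G) = card (verts (cartprod (F i))) * card (verts (cartprod (Pp i @ Qq i)))"
      unfolding GT using card_block[of "Pp i" "F i" "Qq i"] spl[OF i] by simp
    have "card (verts (cartprod (F i))) > 0"
      using neL[OF subs(1)[OF i]] graphD(1)[OF good_graph[OF goodL[OF subs(1)[OF i]]]] by (simp add: card_gt_0_iff)
    then show ?thesis unfolding val_def cpF c by simp
  qed
  define M where "M = Max (val ` {..<k})"
  have "0 \<in> {..<k}" using k1 by simp
  then have finM: "finite (val ` {..<k})" "val ` {..<k} \<noteq> {}" by auto
  have upper: "dist_threshold G \<le> M + 1"
  proof (rule theta_upper[OF finV])
    fix c :: "'a list \<Rightarrow> nat" assume nd: "\<not> distinguishing G c"
    obtain f v where fv: "automorphism G f" "\<And>w. w \<in> verts G \<Longrightarrow> c (f w) = c w" "v \<in> verts G" "f v \<noteq> v"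
      using nondistD[OF nd] by blast
    have lv: "length v = length Ts" "length (f v) = length Ts"
      using len_cp fv(3) aut_in[OF fv(1) fv(3)] unfolding GT by blast+
    obtain j where j: "j < length Ts" "(f v)!j \<noteq> v!j"
      using fv(4) lv nth_equalityI by metis
    obtain i where i: "i < k" "length (Pp i) \<le> j" "j < length (Pp i) + t i" using blk[OF j(1)] by blast
    have ob: "length (Pp i) + t i \<le> length Ts" using spl[OF i(1)] lF by simp
    have fne: "fst (sphi (length (Pp i)) (t i) (f v)) \<noteq> fst (sphi (length (Pp i)) (t i) v)"
      using sphi_fst_eq[OF lv(2) lv(1) ob] j i by blast
    have "card (c ` verts G) \<le> (dist_threshold (cartprod (F i)) - 1) * card (verts (cartprod (Pp i @ Qq i)))"
      using upper_block[of "Pp i" "F i" "Qq i" f c v] spl[OF i(1)] GT goodT prT goodL[OF subs(1)[OF i(1)]]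
        goodL[OF subs(2)[OF i(1)]] Ccond[OF i(1)] fv(1,2,3) fne lF neL[OF subs(1)[OF i(1)]] neL[OF subs(2)[OF i(1)]]
      by simp
    also have "\<dots> = val i" using val_eq[OF i(1)] by simp
    also have "\<dots> \<le> M" unfolding M_def using finM i(1) by simp
    finally show "card (c ` verts G) \<le> M" .
  qed
  have lower: "M + 1 \<le> dist_threshold G"
  proof -
    obtain i where i: "i < k" "M = val i" using Max_in[OF finM] unfolding M_def by auto
    show ?thesis
    proof (cases "val i = 0")
      case True then show ?thesis using i theta_P(2)[OF finV] by simp
    next
      case False
      then have t2: "dist_threshold (cartprod (F i)) \<ge> 2" and ne: "card (verts (cartprod (Pp i @ Qq i))) \<noteq> 0"
        using val_eq[OF i(1)] by auto
      have neR: "verts (cartprod (Pp i @ Qq i)) \<noteq> {}" using ne by auto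
      obtain c where c: "\<not> distinguishing (cartprod (Pp i @ F i @ Qq i)) c"
        "card (c ` verts (cartprod (Pp i @ F i @ Qq i))) = (dist_threshold (cartprod (F i)) - 1) * card (verts (cartprod (Pp i @ Qq i)))"
        using lower_block[OF goodL[OF subs(1)[OF i(1)]] goodL[OF subs(2)[OF i(1)]] neR t2] by blast
      have "\<not> distinguishing G c" "card (c ` verts G) = M"
        using c spl[OF i(1)] GT val_eq[OF i(1)] i(2) by simp_all
      then show ?thesis using theta_nondist[OF finV] by metis
    qed
  qed
  show ?thesis using upper lower unfolding M_def val_def by simp
qed

end
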